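(* Let $X$ be a definable set in the ordered Fraenkel–Mostowski model $\mathbf{ZFA}(\mathcal{Q})$ of set theory with atoms. Then for any field $\mathcal{K}$ (without atoms) the vector space $\mathcal{K}^X$ has a definable basis.
   Context: $\mathcal{Q}=\langle\mathbb{Q},\le\rangle$ is the rationals with their natural order; its automorphisms are the order-preserving bijections. $\mathbf{ZFA}(\mathcal{Q})$ is the permutation model with atoms $\mathbb{Q}$ consisting of hereditarily finitely supported sets (a set is supported by finite $A_0\subseteq\mathbb{Q}$ if fixed by all automorphisms fixing $A_0$ pointwise). A set is definable if for some finite $A_0$ it is supported by $A_0$ and has finitely many orbits under automorphisms fixing $A_0$ pointwise. $\mathcal{K}^X$ is the vector space of finitely supported functions $X\to\mathcal{K}$. *)

theory Defs
  imports Complex_Main "HOL-Library.Function_Algebras"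
begin

definition aut :: "(rat \<Rightarrow> rat) \<Rightarrow> bool" where
  "aut \<pi> \<longleftrightarrow> bij \<pi> \<and> (\<forall>p q. p \<le> q \<longleftrightarrow> \<pi> p \<le> \<pi> q)"

definition fixing :: "rat set \<Rightarrow> (rat \<Rightarrow> rat) \<Rightarrow> bool" where
  "fixing A \<pi> \<longleftrightarrow> aut \<pi> \<and> (\<forall>a\<in>A. \<pi> a = a)"

text \<open>A universe of objects of ZFA(Q), abstractly: a type with an action of Aut(Q)
  in which every element is finitely supported (a nominal set over Q).\<close>
definition supports :: "((rat \<Rightarrow> rat) \<Rightarrow> 'x \<Rightarrow> 'x) \<Rightarrow> rat set \<Rightarrow> 'x \<Rightarrow> bool" where
  "supports act A x \<longleftrightarrow> (\<forall>\<pi>. fixing A \<pi> \<longrightarrow> act \<pi> x = x)"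

definition fm_universe :: "((rat \<Rightarrow> rat) \<Rightarrow> 'x \<Rightarrow> 'x) \<Rightarrow> bool" where
  "fm_universe act \<longleftrightarrow>
     (\<forall>x. act id x = x) \<and>
     (\<forall>\<pi> \<sigma> x. aut \<pi> \<longrightarrow> aut \<sigma> \<longrightarrow> act (\<pi> \<circ> \<sigma>) x = act \<pi> (act \<sigma> x)) \<and>
     (\<forall>x. \<exists>A. finite A \<and> supports act A x)"

definition supports_set :: "((rat \<Rightarrow> rat) \<Rightarrow> 'x \<Rightarrow> 'x) \<Rightarrow> rat set \<Rightarrow> 'x set \<Rightarrow> bool" where
  "supports_set act A S \<longleftrightarrow> (\<forall>\<pi>. fixing A \<pi> \<longrightarrow> act \<pi> ` S = S)"

definition orbit :: "((rat \<Rightarrow> rat) \<Rightarrow> 'x \<Rightarrow> 'x) \<Rightarrow> rat set \<Rightarrow> 'x \<Rightarrow> 'x set" where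
  "orbit act A x = {act \<pi> x | \<pi>. fixing A \<pi>}"

definition definable :: "((rat \<Rightarrow> rat) \<Rightarrow> 'x \<Rightarrow> 'x) \<Rightarrow> 'x set \<Rightarrow> bool" where
  "definable act S \<longleftrightarrow> (\<exists>A. finite A \<and> supports_set act A S \<and> finite (orbit act A ` S))"

text \<open>Functions X \<rightarrow> K are represented as functions on the whole type that vanish
  outside X. The action of \<pi> on such an f (viewed as its graph) is
  (\<pi>.f)(y) = f(\<pi>^-1 . y), with domain \<pi>.X.\<close>
definition fun_act :: "((rat \<Rightarrow> rat) \<Rightarrow> 'x \<Rightarrow> 'x) \<Rightarrow> (rat \<Rightarrow> rat) \<Rightarrow> ('x \<Rightarrow> 'k) \<Rightarrow> ('x \<Rightarrow> 'k)" where
  "fun_act act \<pi> f = f \<circ> act (inv \<pi>)"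

definition supports_fun :: "((rat \<Rightarrow> rat) \<Rightarrow> 'x \<Rightarrow> 'x) \<Rightarrow> 'x set \<Rightarrow> rat set \<Rightarrow> ('x \<Rightarrow> 'k) \<Rightarrow> bool" where
  "supports_fun act X A f \<longleftrightarrow>
     (\<forall>\<pi>. fixing A \<pi> \<longrightarrow> act \<pi> ` X = X \<and> (\<forall>y\<in>X. fun_act act \<pi> f y = f y))"

text \<open>K^X: the finitely supported functions X \<rightarrow> K.\<close>
definition fs_funs :: "((rat \<Rightarrow> rat) \<Rightarrow> 'x \<Rightarrow> 'x) \<Rightarrow> 'x set \<Rightarrow> ('x \<Rightarrow> 'k::zero) set" where
  "fs_funs act X = {f. (\<forall>x. x \<notin> X \<longrightarrow> f x = 0) \<and> (\<exists>A. finite A \<and> supports_fun act X A f)}"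

definition definable_funset :: "((rat \<Rightarrow> rat) \<Rightarrow> 'x \<Rightarrow> 'x) \<Rightarrow> 'x set \<Rightarrow> ('x \<Rightarrow> 'k) set \<Rightarrow> bool" where
  "definable_funset act X B \<longleftrightarrow>
     (\<exists>A. finite A \<and>
          (\<forall>\<pi>. fixing A \<pi> \<longrightarrow> act \<pi> ` X = X \<and> fun_act act \<pi> ` B = B) \<and>
          finite ((\<lambda>f. {fun_act act \<pi> f | \<pi>. fixing A \<pi>}) ` B))"

definition fscale :: "'k::field \<Rightarrow> ('x \<Rightarrow> 'k) \<Rightarrow> ('x \<Rightarrow> 'k)" where
  "fscale c f = (\<lambda>x. c * f x)"

end

theory Submission
  imports Defs
begin

lemma sum_fun_apply: "(sum f S) x = (\<Sum>i\<in>S. f i x)"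
  by (induction S rule: infinite_finite_induct) auto

section \<open>Automorphisms\<close>

lemma aut_strict: "aut \<pi> \<Longrightarrow> (p < q) = (\<pi> p < \<pi> q)"
  unfolding aut_def by (metis linorder_not_le)

lemma aut_eq: "aut \<pi> \<Longrightarrow> (\<pi> p = \<pi> q) = (p = q)"
  unfolding aut_def by (metis order_antisym order_refl)

lemma aut_le: "aut \<pi> \<Longrightarrow> (p \<le> q) = (\<pi> p \<le> \<pi> q)"
  unfolding aut_def by blast

lemma aut_inj: "aut \<pi> \<Longrightarrow> inj \<pi>"
  unfolding aut_def bij_def by blast

lemma aut_bij: "aut \<pi> \<Longrightarrow> bij \<pi>"
  unfolding aut_def by blast

lemma aut_id[simp]: "aut id"
  unfolding aut_def by simp

lemma aut_comp: "aut \<pi> \<Longrightarrow> aut \<sigma> \<Longrightarrow> aut (\<pi> \<circ> \<sigma>)"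
  unfolding aut_def by (auto intro: bij_comp)

lemma aut_inv: assumes "aut \<pi>" shows "aut (inv \<pi>)"
proof -
  have b: "bij \<pi>" using assms aut_bij by blast
  have "bij (inv \<pi>)" using b by (simp add: bij_imp_bij_inv)
  moreover have "p \<le> q \<longleftrightarrow> inv \<pi> p \<le> inv \<pi> q" for p q
    using aut_le[OF assms, of "inv \<pi> p" "inv \<pi> q"] surj_f_inv_f[OF bij_is_surj[OF b]] by simp
  ultimately show ?thesis unfolding aut_def by blast
qed

lemma aut_inv_l[simp]: "aut \<pi> \<Longrightarrow> inv \<pi> (\<pi> x) = x"
  by (meson aut_inj inv_f_f)

lemma aut_inv_r[simp]: "aut \<pi> \<Longrightarrow> \<pi> (inv \<pi> x) = x"
  by (meson aut_bij bij_inv_eq_iff)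

lemma aut_comp_inv[simp]: "aut \<pi> \<Longrightarrow> \<pi> \<circ> inv \<pi> = id"
  by auto

lemma aut_inv_comp[simp]: "aut \<pi> \<Longrightarrow> inv \<pi> \<circ> \<pi> = id"
  by auto

lemma fixing_id[simp]: "fixing A id"
  unfolding fixing_def by simp

lemma fixing_comp: "fixing A \<pi> \<Longrightarrow> fixing A \<sigma> \<Longrightarrow> fixing A (\<pi> \<circ> \<sigma>)"
  unfolding fixing_def by (auto intro: aut_comp)

lemma fixing_inv: "fixing A \<pi> \<Longrightarrow> fixing A (inv \<pi>)"
  unfolding fixing_def by (metis aut_inv aut_inv_l)

lemma fixing_mono: "fixing B \<pi> \<Longrightarrow> A \<subseteq> B \<Longrightarrow> fixing A \<pi>"
  unfolding fixing_def by blast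

lemma fixing_aut: "fixing A \<pi> \<Longrightarrow> aut \<pi>"
  unfolding fixing_def by blast

lemma fixing_fix: "fixing A \<pi> \<Longrightarrow> a \<in> A \<Longrightarrow> \<pi> a = a"
  unfolding fixing_def by blast

lemma fixing_conj: "fixing A \<sigma> \<Longrightarrow> aut \<pi> \<Longrightarrow> fixing (\<pi> ` A) (\<pi> \<circ> \<sigma> \<circ> inv \<pi>)"
  unfolding fixing_def by (auto intro!: aut_comp aut_inv)

definition mv :: "rat \<Rightarrow> rat \<Rightarrow> rat \<Rightarrow> rat \<Rightarrow> rat \<Rightarrow> rat" where
  "mv l r p q x = (if x \<le> l then x else if x \<le> p then l + (x - l) * (q - l) / (p - l)
      else if x < r then q + (x - p) * (r - q) / (r - p) else x)"

lemma mv_k: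
  "mv l r p q z = (if z \<le> l then z else if z \<le> p then l + (z - l) * ((q - l) / (p - l))
      else if z < r then q + (z - p) * ((r - q) / (r - p)) else z)"
  by (simp add: mv_def)

lemma mv_strict:
  assumes "l < p" "p < r" "l < q" "q < r" "x < y"
  shows "mv l r p q x < mv l r p q y"
proof -
  define k1 where "k1 = (q - l) / (p - l)"
  define k2 where "k2 = (r - q) / (r - p)"
  have a: "0 < k1" "0 < k2" using assms by (auto simp: k1_def k2_def)
  have m1: "z \<le> p \<Longrightarrow> l + (z - l) * k1 \<le> q" for z
  proof -
    assume "z \<le> p"
    hence "(z - l) * k1 \<le> (p - l) * k1"
      using a by (intro mult_right_mono) auto
    also have "\<dots> = q - l" using assms by (simp add: k1_def)
    finally show ?thesis by simp
  qed
  have m1': "l < z \<Longrightarrow> l < l + (z - l) * k1" for z using a mult_pos_pos[of "z - l" k1] by simp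
  have m2: "z < r \<Longrightarrow> q + (z - p) * k2 < r" for z
  proof -
    assume "z < r"
    hence "(z - p) * k2 < (r - p) * k2"
      using a by (intro mult_strict_right_mono) auto
    also have "\<dots> = r - q" using assms by (simp add: k2_def)
    finally show ?thesis by simp
  qed
  have m2': "p < z \<Longrightarrow> q < q + (z - p) * k2" for z using a mult_pos_pos[of "z - p" k2] by simp
  have s1: "(x - l) * k1 < (y - l) * k1"
    using a assms by (intro mult_strict_right_mono) auto
  have s2: "(x - p) * k2 < (y - p) * k2"
    using a assms by (intro mult_strict_right_mono) auto
  have mvk: "mv l r p q z = (if z \<le> l then z else if z \<le> p then l + (z - l) * k1
      else if z < r then q + (z - p) * k2 else z)" for z
    unfolding k1_def k2_def by (rule mv_k)
  have X1: "x \<le> l \<Longrightarrow> mv l r p q x = x" by (simp add: mvk)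
  have X2: "l < x \<Longrightarrow> x \<le> p \<Longrightarrow> mv l r p q x = l + (x - l) * k1" by (simp add: mvk)
  have X3: "p < x \<Longrightarrow> x < r \<Longrightarrow> mv l r p q x = q + (x - p) * k2" using assms by (simp add: mvk)
  have X4: "r \<le> x \<Longrightarrow> mv l r p q x = x" using assms by (simp add: mvk)
  have Y1: "y \<le> l \<Longrightarrow> mv l r p q y = y" by (simp add: mvk)
  have Y2: "l < y \<Longrightarrow> y \<le> p \<Longrightarrow> mv l r p q y = l + (y - l) * k1" by (simp add: mvk)
  have Y3: "p < y \<Longrightarrow> y < r \<Longrightarrow> mv l r p q y = q + (y - p) * k2" using assms by (simp add: mvk)
  have Y4: "r \<le> y \<Longrightarrow> mv l r p q y = y" using assms by (simp add: mvk)
  consider "y \<le> l" | "l < y" "y \<le> p" | "p < y" "y < r" | "r \<le> y" by force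
  then show ?thesis
  proof cases
    case 1 then show ?thesis using X1 Y1 assms by simp
  next
    case 2
    then show ?thesis
    proof (cases "x \<le> l")
      case True then show ?thesis using X1 Y2 2 m1'[of y] by simp
    next
      case False then show ?thesis using X2 Y2 2 s1 assms by simp
    qed
  next
    case 3
    consider "x \<le> l" | "l < x" "x \<le> p" | "p < x" by force
    then show ?thesis
    proof cases
      case 1 then show ?thesis using X1 Y3 3 m2'[of y] assms by simp
    next
      case 2 then show ?thesis using X2 Y3 3 m2'[of y] m1[of x] by simp
    next
      case c: 3 then show ?thesis using X3 Y3 3 s2 assms by simp
    qed
  next
    case 4
    consider "x \<le> l" | "l < x" "x \<le> p" | "p < x" "x < r" | "r \<le> x" by force
    then show ?thesis
    proof cases
      case 1 then show ?thesis using X1 Y4 4 assms by simp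
    next
      case 2 then show ?thesis using X2 Y4 4 m1[of x] assms by simp
    next
      case c: 3 then show ?thesis using X3 Y4 4 m2[of x] by simp
    next
      case c: 4 then show ?thesis using X4 Y4 assms by simp
    qed
  qed
qed

lemma mv_inv:
  assumes "l < p" "p < r" "l < q" "q < r"
  shows "mv l r q p (mv l r p q x) = x"
proof -
  consider "x \<le> l" | "l < x" "x \<le> p" | "p < x" "x < r" | "r \<le> x" by force
  then show ?thesis
  proof cases
    case 1 then show ?thesis by (simp add: mv_def)
  next
    case 2
    define v where "v = l + (x - l) * (q - l) / (p - l)"
    have v: "mv l r p q x = v" using 2 by (simp add: mv_def v_def)
    have "l < v" "v \<le> q"
      using mv_strict[OF assms, of l x] mv_strict[OF assms, of x p] 2 assms
      by (cases "x = p"; auto simp: mv_def v_def)+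
    moreover have "(v - l) * (p - l) / (q - l) = x - l" using assms by (simp add: v_def)
    ultimately show ?thesis using v assms by (simp add: mv_def)
  next
    case 3
    define v where "v = q + (x - p) * (r - q) / (r - p)"
    have v: "mv l r p q x = v" using 3 assms by (simp add: mv_def v_def)
    have "q < v" "v < r"
      using mv_strict[OF assms, of p x] mv_strict[OF assms, of x r] 3 assms
      by (auto simp: mv_def v_def split: if_splits)
    moreover have "(v - q) * (r - p) / (r - q) = x - p" using assms by (simp add: v_def)
    ultimately show ?thesis using v assms by (simp add: mv_def)
  next
    case 4 then show ?thesis using assms by (simp add: mv_def)
  qed
qed

lemma mv_aut:
  assumes "l < p" "p < r" "l < q" "q < r"
  shows "aut (mv l r p q)"
proof -
  have st: "x < y \<Longrightarrow> mv l r p q x < mv l r p q y" for x y using mv_strict[OF assms] by blast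
  have "bij (mv l r p q)"
    by (rule bij_betw_byWitness[where f'="mv l r q p"])
       (use mv_inv[OF assms] mv_inv[of l q r p] assms in auto)
  moreover have "x \<le> y \<longleftrightarrow> mv l r p q x \<le> mv l r p q y" for x y
    using st[of x y] st[of y x] by (cases x y rule: linorder_cases) auto
  ultimately show ?thesis unfolding aut_def by blast
qed

lemma mv_p: "l < p \<Longrightarrow> p < r \<Longrightarrow> mv l r p q p = q"
  by (simp add: mv_def)

lemma mv_out: "x \<le> l \<or> r \<le> x \<Longrightarrow> l < p \<Longrightarrow> p < r \<Longrightarrow> mv l r p q x = x"
  by (auto simp: mv_def)

lemma move:
  assumes F: "finite F" and pq: "p \<notin> F" "q \<notin> F" and cell: "\<forall>f\<in>F. f < p \<longleftrightarrow> f < q"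
  shows "\<exists>\<pi>. fixing F \<pi> \<and> \<pi> p = q"
proof -
  define L where "L = {f\<in>F. f < p}"
  define R where "R = {f\<in>F. p < f}"
  define l where "l = (if L = {} then min p q - 1 else Max L)"
  define r where "r = (if R = {} then max p q + 1 else Min R)"
  have fL: "finite L" "finite R" using F by (auto simp: L_def R_def)
  have lp: "l < p" "l < q"
    using fL cell by (auto simp: l_def L_def)
  have rp: "p < r" "q < r"
  proof -
    show "p < r" using fL by (auto simp: r_def R_def)
    show "q < r"
    proof (cases "R = {}")
      case True then show ?thesis by (simp add: r_def)
    next
      case False
      have "Min R \<in> R" using False fL Min_in by blast
      hence "Min R \<in> F" "p < Min R" by (auto simp: R_def)
      hence "\<not> Min R < q" using cell pq by (metis linorder_neqE order.asym)
      moreover have "Min R \<noteq> q" using \<open>Min R \<in> F\<close> pq by auto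
      ultimately show ?thesis using False by (simp add: r_def)
    qed
  qed
  have fixF: "mv l r p q f = f" if "f \<in> F" for f
  proof -
    have "f \<noteq> p" using that pq by auto
    then consider "f < p" | "p < f" by force
    then show ?thesis
    proof cases
      case 1
      hence "f \<in> L" "L \<noteq> {}" using that by (auto simp: L_def)
      hence "f \<le> l" using fL by (simp add: l_def)
      then show ?thesis using lp rp by (intro mv_out) auto
    next
      case 2
      hence "f \<in> R" "R \<noteq> {}" using that by (auto simp: R_def)
      hence "r \<le> f" using fL by (simp add: r_def)
      then show ?thesis using lp rp by (intro mv_out) auto
    qed
  qed
  show ?thesis
    using mv_aut[OF lp(1) rp(1) lp(2) rp(2)] mv_p[OF lp(1) rp(1)] fixF
    by (auto simp: fixing_def)
qed

lemma extend:
  assumes "finite F" "\<forall>x\<in>F. \<forall>y\<in>F. x < y \<longrightarrow> g x < g y"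
  shows "\<exists>\<pi>. aut \<pi> \<and> (\<forall>x\<in>F. \<pi> x = g x)"
  using assms
proof (induction "card F" arbitrary: F)
  case 0
  hence "F = {}" by simp
  then show ?case using aut_id by blast
next
  case (Suc n)
  hence ne: "F \<noteq> {}" by auto
  define m where "m = Max F"
  have mF: "m \<in> F" using Suc.prems ne by (simp add: m_def)
  define F' where "F' = F - {m}"
  have cF': "n = card F'" using Suc mF by (simp add: F'_def)
  obtain \<pi>' where \<pi>': "aut \<pi>'" "\<forall>x\<in>F'. \<pi>' x = g x"
    using Suc.hyps(1)[OF cF'] Suc.prems by (auto simp: F'_def)
  have lt: "x < m" if "x \<in> F'" for x
    using that Suc.prems(1) by (auto simp: F'_def m_def less_le)
  have c1: "\<forall>f\<in>g ` F'. f < \<pi>' m \<longleftrightarrow> f < g m"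
  proof
    fix f assume "f \<in> g ` F'"
    then obtain x where x: "x \<in> F'" "f = g x" by auto
    have "g x < g m" using Suc.prems(2) x lt mF by (auto simp: F'_def)
    moreover have "\<pi>' x < \<pi>' m" using aut_strict[OF \<pi>'(1)] lt[OF x(1)] by blast
    ultimately show "f < \<pi>' m \<longleftrightarrow> f < g m" using x \<pi>' by auto
  qed
  have gx: "\<forall>x\<in>F'. g x < g m" using Suc.prems(2) lt mF by (auto simp: F'_def)
  have n1: "\<pi>' m \<notin> g ` F'" "g m \<notin> g ` F'" using c1 gx by (metis imageE order.irrefl)+
  obtain \<sigma> where \<sigma>: "fixing (g ` F') \<sigma>" "\<sigma> (\<pi>' m) = g m"
    using move[OF _ n1 c1] Suc.prems(1) by (auto simp: F'_def)
  have "aut (\<sigma> \<circ> \<pi>')" using \<sigma> \<pi>' by (auto intro: aut_comp fixing_aut)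
  moreover have "\<forall>x\<in>F. (\<sigma> \<circ> \<pi>') x = g x"
  proof
    fix x assume "x \<in> F"
    show "(\<sigma> \<circ> \<pi>') x = g x"
    proof (cases "x = m")
      case True then show ?thesis using \<sigma> by simp
    next
      case False
      hence "x \<in> F'" using \<open>x \<in> F\<close> by (simp add: F'_def)
      then show ?thesis using \<sigma>(1) \<pi>' by (auto simp: fixing_def)
    qed
  qed
  ultimately show ?case by blast
qed

lemma extend_rel:
  assumes "finite C" "finite S" "aut \<pi>"
    and "\<forall>t\<in>S. \<forall>c\<in>C. (t < c \<longleftrightarrow> \<pi> t < c) \<and> (c < t \<longleftrightarrow> c < \<pi> t)"
  shows "\<exists>\<rho>. fixing C \<rho> \<and> (\<forall>t\<in>S. \<rho> t = \<pi> t)"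
proof -
  define g where "g x = (if x \<in> C then x else \<pi> x)" for x
  have eqC: "\<pi> t = t" if "t \<in> S" "t \<in> C" for t
    using assms(4) that by (metis linorder_neqE order.irrefl)
  have gS: "g t = \<pi> t" if "t \<in> S" for t using eqC that by (auto simp: g_def)
  have "\<forall>x\<in>C \<union> S. \<forall>y\<in>C \<union> S. x < y \<longrightarrow> g x < g y"
  proof (intro ballI impI)
    fix x y assume xy: "x \<in> C \<union> S" "y \<in> C \<union> S" "x < y"
    show "g x < g y"
    proof (cases "x \<in> C")
      case xC: True
      show ?thesis
      proof (cases "y \<in> C")
        case True then show ?thesis using xC xy by (simp add: g_def)
      next
        case False
        hence "y \<in> S" using xy by auto
        then show ?thesis using xC False xy assms(4) by (auto simp: g_def)
      qed
    next
      case xC: False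
      hence xS: "x \<in> S" using xy by auto
      show ?thesis
      proof (cases "y \<in> C")
        case True then show ?thesis using xC xS xy assms(4) by (auto simp: g_def)
      next
        case False
        hence "y \<in> S" using xy by auto
        then show ?thesis using xC False xy aut_strict[OF assms(3)] by (auto simp: g_def)
      qed
    qed
  qed
  then obtain \<rho> where \<rho>: "aut \<rho>" "\<forall>x\<in>C \<union> S. \<rho> x = g x"
    using extend[of "C \<union> S" g] assms by auto
  show ?thesis
    using \<rho> gS by (intro exI[of _ \<rho>]) (auto simp: fixing_def g_def)
qed


lemma cell_above:
  fixes F :: "rat set"
  assumes "finite F" "z \<notin> F"
  shows "\<exists>r. z < r \<and> r \<notin> F \<and> (\<forall>f\<in>F. f < z \<longleftrightarrow> f < r)"
proof -
  define R where "R = {f\<in>F. z < f}"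
  have fR: "finite R" using assms by (simp add: R_def)
  show ?thesis
  proof (cases "R = {}")
    case True
    have "f < z" if "f \<in> F" for f
    proof -
      have "\<not> z < f" using True that by (auto simp: R_def)
      moreover have "f \<noteq> z" using that assms by auto
      ultimately show ?thesis by simp
    qed
    hence "z + 1 \<notin> F" "\<forall>f\<in>F. f < z \<longleftrightarrow> f < z + 1" by force+
    then show ?thesis by (intro exI[of _ "z + 1"]) auto
  next
    case False
    define m where "m = Min R"
    have m: "m \<in> R" "\<forall>f\<in>R. m \<le> f" using False fR by (auto simp: m_def)
    have zm: "z < m" using m by (auto simp: R_def)
    show ?thesis
    proof (intro exI[of _ "(z + m) / 2"] conjI)
      show "z < (z + m) / 2" using zm by simp
      have "(z + m) / 2 < m" using zm by simp
      show "(z + m) / 2 \<notin> F"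
      proof
        assume h: "(z + m) / 2 \<in> F"
        hence "(z + m) / 2 \<in> R" using zm by (simp add: R_def)
        thus False using m \<open>(z + m) / 2 < m\<close> by force
      qed
      show "\<forall>f\<in>F. f < z \<longleftrightarrow> f < (z + m) / 2"
      proof
        fix f assume "f \<in> F"
        show "f < z \<longleftrightarrow> f < (z + m) / 2"
        proof
          assume "f < z" thus "f < (z + m) / 2" using zm by simp
        next
          assume f: "f < (z + m) / 2"
          show "f < z"
          proof (rule ccontr)
            assume "\<not> f < z"
            hence "z < f" using \<open>f \<in> F\<close> assms(2) by (metis linorder_neqE)
            hence "f \<in> R" using \<open>f \<in> F\<close> by (simp add: R_def)
            thus False using m f \<open>(z + m) / 2 < m\<close> by force
          qed
        qed
      qed
    qed
  qed
qed

lemma cell_below: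
  fixes F :: "rat set"
  assumes "finite F" "z \<notin> F"
  shows "\<exists>r. r < z \<and> r \<notin> F \<and> (\<forall>f\<in>F. f < z \<longleftrightarrow> f < r)"
proof -
  have "finite (uminus ` F)" "- z \<notin> uminus ` F" using assms by auto
  from cell_above[OF this] obtain r where r: "- z < r" "r \<notin> uminus ` F"
    "\<forall>f\<in>uminus ` F. f < - z \<longleftrightarrow> f < r" by blast
  show ?thesis
  proof (intro exI[of _ "- r"] conjI)
    show "- r < z" using r by simp
    show "- r \<notin> F" using r(2) by (metis image_eqI minus_minus)
    show "\<forall>f\<in>F. f < z \<longleftrightarrow> f < - r"
    proof
      fix f assume f: "f \<in> F"
      have "- f < - z \<longleftrightarrow> - f < r" using r(3) f by auto
      moreover have "f \<noteq> z" "f \<noteq> - r" using f assms(2) \<open>- r \<notin> F\<close> by auto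
      ultimately show "f < z \<longleftrightarrow> f < - r" by (cases "f < z"; auto)
    qed
  qed
qed

locale nom =
  fixes act :: "(rat \<Rightarrow> rat) \<Rightarrow> 'x \<Rightarrow> 'x"
  assumes fm: "fm_universe act"
begin

lemma act_id[simp]: "act id x = x"
  using fm unfolding fm_universe_def by blast

lemma act_comp: "aut \<pi> \<Longrightarrow> aut \<sigma> \<Longrightarrow> act (\<pi> \<circ> \<sigma>) x = act \<pi> (act \<sigma> x)"
  using fm unfolding fm_universe_def by blast

lemma act_inv_l[simp]: assumes a: "aut \<pi>" shows "act (inv \<pi>) (act \<pi> x) = x"
proof -
  have "act (inv \<pi>) (act \<pi> x) = act (inv \<pi> \<circ> \<pi>) x" by (rule act_comp[OF aut_inv[OF a] a, symmetric])
  thus ?thesis by (simp only: aut_inv_comp[OF a] act_id)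
qed

lemma act_inv_r[simp]: assumes a: "aut \<pi>" shows "act \<pi> (act (inv \<pi>) x) = x"
proof -
  have "act \<pi> (act (inv \<pi>) x) = act (\<pi> \<circ> inv \<pi>) x" by (rule act_comp[OF a aut_inv[OF a], symmetric])
  thus ?thesis by (simp only: aut_comp_inv[OF a] act_id)
qed

lemma act_inj: "aut \<pi> \<Longrightarrow> act \<pi> x = act \<pi> y \<longleftrightarrow> x = y"
  by (metis act_inv_l)

lemma supp_ex: "\<exists>A. finite A \<and> supports act A x"
  using fm unfolding fm_universe_def by blast

lemma supports_mono: "supports act S x \<Longrightarrow> S \<subseteq> T \<Longrightarrow> supports act T x"
  unfolding supports_def using fixing_mono by blast

lemma supports_agree:
  assumes "supports act S x" "aut \<pi>" "aut \<sigma>" "\<forall>s\<in>S. \<pi> s = \<sigma> s"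
  shows "act \<pi> x = act \<sigma> x"
proof -
  have "fixing S (inv \<sigma> \<circ> \<pi>)"
    using assms by (auto simp: fixing_def intro!: aut_comp aut_inv)
  hence "act (inv \<sigma> \<circ> \<pi>) x = x" using assms(1) by (simp add: supports_def)
  hence "act (inv \<sigma>) (act \<pi> x) = x" using assms by (simp add: act_comp aut_inv)
  thus ?thesis using assms(3) by (metis act_inv_r)
qed

lemma supports_img:
  assumes "supports act S x" "aut \<pi>"
  shows "supports act (\<pi> ` S) (act \<pi> x)"
  unfolding supports_def
proof (intro allI impI)
  fix \<tau> assume t: "fixing (\<pi> ` S) \<tau>"
  have "act (\<tau> \<circ> \<pi>) x = act \<pi> x"
    using t assms by (intro supports_agree) (auto simp: fixing_def intro: aut_comp)
  thus "act \<tau> (act \<pi> x) = act \<pi> x" using t assms by (simp add: act_comp fixing_def)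
qed

lemma supports_move:
  assumes "supports act S x" "fixing T \<sigma>" "supports act T x"
  shows "supports act (\<sigma> ` S) x"
  using supports_img[OF assms(1) fixing_aut[OF assms(2)]] assms(2,3)
  by (simp add: supports_def)

lemma supports_remove:
  assumes fS: "finite S" and pS: "p \<in> S" and sx: "supports act S x" and qS: "q \<notin> S"
    and cq: "\<forall>f\<in>S - {p}. f < p \<longleftrightarrow> f < q"
    and sq: "supports act ((S - {p}) \<union> {q}) x"
  shows "supports act (S - {p}) x"
proof -
  define S0 where "S0 = S - {p}"
  have fS0: "finite S0" using fS by (simp add: S0_def)
  have pS0: "p \<notin> S0" by (simp add: S0_def)
  have SS: "S = S0 \<union> {p}" using pS by (auto simp: S0_def)
  have qp: "q \<noteq> p" using pS qS by auto
  have stepa: "supports act (S0 \<union> {q'}) x"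
    if q': "q' \<notin> S0" "q' \<noteq> p" "\<forall>f\<in>S0. f < p \<longleftrightarrow> f < q'" "p < q' \<longleftrightarrow> p < q" for q'
  proof -
    have "\<exists>\<sigma>. fixing S \<sigma> \<and> \<sigma> q = q'"
      using q' qS cq[folded S0_def] fS by (intro move) (auto simp: SS)
    then obtain \<sigma> where \<sigma>: "fixing S \<sigma>" "\<sigma> q = q'" by blast
    have "\<sigma> ` (S0 \<union> {q}) = S0 \<union> {q'}"
      using \<sigma> by (auto simp: fixing_def SS image_iff)
    thus ?thesis using supports_move[OF sq[folded S0_def] \<sigma>(1) sx] by simp
  qed
  show ?thesis
    unfolding S0_def[symmetric] supports_def
  proof (intro allI impI)
    fix \<pi> assume \<pi>: "fixing S0 \<pi>"
    have a\<pi>: "aut \<pi>" using \<pi> by (simp add: fixing_def)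
    define p' where "p' = \<pi> p"
    have p'S0: "p' \<notin> S0"
    proof
      assume "p' \<in> S0"
      hence "\<pi> p' = \<pi> p" using fixing_fix[OF \<pi>] by (simp add: p'_def)
      hence "p' = p" using aut_eq[OF a\<pi>] by blast
      thus False using pS0 \<open>p' \<in> S0\<close> by simp
    qed
    have cp': "\<forall>f\<in>S0. f < p \<longleftrightarrow> f < p'"
    proof
      fix f assume f: "f \<in> S0"
      have "f < p \<longleftrightarrow> \<pi> f < \<pi> p" using aut_strict[OF a\<pi>] by blast
      thus "f < p \<longleftrightarrow> f < p'" using fixing_fix[OF \<pi> f] by (simp add: p'_def)
    qed
    obtain r where r: "r \<notin> S0" "r \<noteq> p" "r \<noteq> p'" "\<forall>f\<in>S0. f < p \<longleftrightarrow> f < r"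
      "p < r \<longleftrightarrow> p < q" "r < p \<longleftrightarrow> r < p'"
    proof (cases "p < q")
      case True
      have "max p p' \<notin> S0" using pS0 p'S0 by (simp add: max_def)
      from cell_above[OF fS0 this] obtain r where
        r: "max p p' < r" "r \<notin> S0" "\<forall>f\<in>S0. f < max p p' \<longleftrightarrow> f < r" by blast
      have "\<forall>f\<in>S0. f < p \<longleftrightarrow> f < max p p'"
      proof
        fix f assume "f \<in> S0"
        hence "f < p \<longleftrightarrow> f < p'" using cp' by blast
        thus "f < p \<longleftrightarrow> f < max p p'" by (auto simp: max_def)
      qed
      hence "\<forall>f\<in>S0. f < p \<longleftrightarrow> f < r" using r(3) by blast
      then show ?thesis using that r True by auto
    next
      case False
      have "min p p' \<notin> S0" using pS0 p'S0 by (simp add: min_def)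
      from cell_below[OF fS0 this] obtain r where
        r: "r < min p p'" "r \<notin> S0" "\<forall>f\<in>S0. f < min p p' \<longleftrightarrow> f < r" by blast
      have "\<forall>f\<in>S0. f < p \<longleftrightarrow> f < min p p'"
      proof
        fix f assume "f \<in> S0"
        hence "f < p \<longleftrightarrow> f < p'" using cp' by blast
        thus "f < p \<longleftrightarrow> f < min p p'" by (auto simp: min_def)
      qed
      hence "\<forall>f\<in>S0. f < p \<longleftrightarrow> f < r" using r(3) by blast
      then show ?thesis using that r False qp by auto
    qed
    have sr: "supports act (S0 \<union> {r}) x" using stepa[OF r(1,2,4,5)] .
    have "\<exists>\<tau>. fixing (S0 \<union> {r}) \<tau> \<and> \<tau> p = p'"
      using r pS0 p'S0 cp' fS0 by (intro move) auto
    then obtain \<tau> where \<tau>: "fixing (S0 \<union> {r}) \<tau>" "\<tau> p = p'" by blast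
    have "act \<tau> x = x" using sr \<tau> by (simp add: supports_def)
    moreover have "act \<pi> x = act \<tau> x"
      using sx \<pi> \<tau> by (intro supports_agree) (auto simp: fixing_def SS p'_def)
    ultimately show "act \<pi> x = x" by simp
  qed
qed

lemma supports_inter:
  assumes "finite S1" "finite S2" "supports act S1 x" "supports act S2 x"
  shows "supports act (S1 \<inter> S2) x"
  using assms
proof (induction "card (S1 - S2)" arbitrary: S1 rule: less_induct)
  case less
  show ?case
  proof (cases "S1 \<subseteq> S2")
    case True
    then show ?thesis using less.prems by (simp add: Int_absorb2)
  next
    case False
    then obtain p where p: "p \<in> S1" "p \<notin> S2" by blast
    define S0 where "S0 = S1 - {p}"
    have "finite (S1 \<union> S2 - {p})" "p \<notin> S1 \<union> S2 - {p}" using less.prems by auto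
    from cell_above[OF this] obtain q where
      q: "p < q" "q \<notin> S1 \<union> S2 - {p}" "\<forall>f\<in>S1 \<union> S2 - {p}. f < p \<longleftrightarrow> f < q" by blast
    have qS1: "q \<notin> S1" "q \<notin> S2" using q p by auto
    have "\<exists>\<sigma>. fixing (S0 \<union> S2) \<sigma> \<and> \<sigma> p = q"
      using q p qS1 less.prems by (intro move) (auto simp: S0_def)
    then obtain \<sigma> where \<sigma>: "fixing (S0 \<union> S2) \<sigma>" "\<sigma> p = q" by blast
    have S1eq: "S1 = S0 \<union> {p}" using p by (auto simp: S0_def)
    have "\<sigma> ` S0 = S0" using \<sigma>(1) by (force simp: fixing_def)
    hence img: "\<sigma> ` S1 = S0 \<union> {q}" using S1eq \<sigma>(2) by simp
    have "supports act (\<sigma> ` S1) x"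
      using supports_move[OF less.prems(3) fixing_mono[OF \<sigma>(1)] less.prems(4)] by blast
    hence "supports act (S0 \<union> {q}) x" using img by simp
    hence s0: "supports act S0 x"
      unfolding S0_def using supports_remove[OF less.prems(1) p(1) less.prems(3) qS1(1)] q
      by auto
    have "card (S0 - S2) < card (S1 - S2)"
      using p less.prems(1) by (intro psubset_card_mono) (auto simp: S0_def)
    hence "supports act (S0 \<inter> S2) x"
      using less.hyps[of S0] s0 less.prems by (auto simp: S0_def)
    moreover have "S0 \<inter> S2 = S1 \<inter> S2" using p by (auto simp: S0_def)
    ultimately show ?thesis by simp
  qed
qed

definition supp :: "'x \<Rightarrow> rat set" where
  "supp x = \<Inter>{S. finite S \<and> supports act S x}"

lemma supp_props: "finite (supp x) \<and> supports act (supp x) x"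
proof -
  obtain A where A: "finite A" "supports act A x" using supp_ex by blast
  obtain S0 where S0: "finite S0" "supports act S0 x"
    "\<forall>S. finite S \<and> supports act S x \<longrightarrow> card S0 \<le> card S"
    using ex_has_least_nat[of "\<lambda>S. finite S \<and> supports act S x" A card] A by blast
  have sub: "S0 \<subseteq> S" if "finite S" "supports act S x" for S
  proof -
    have "supports act (S0 \<inter> S) x" using supports_inter S0 that by blast
    hence "card S0 \<le> card (S0 \<inter> S)" using S0 that by auto
    hence "S0 \<inter> S = S0" using S0(1) by (meson Int_lower1 card_seteq finite_Int)
    thus ?thesis by blast
  qed
  have "supp x = S0" unfolding supp_def using sub S0 by blast
  thus ?thesis using S0 by simp
qed

lemma supp_finite[simp]: "finite (supp x)"
  using supp_props by blast

lemma supp_supports: "supports act (supp x) x"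
  using supp_props by blast

lemma supp_least: "finite S \<Longrightarrow> supports act S x \<Longrightarrow> supp x \<subseteq> S"
  unfolding supp_def by blast

lemma supp_act: assumes "aut \<pi>" shows "supp (act \<pi> x) = \<pi> ` supp x"
proof
  show "supp (act \<pi> x) \<subseteq> \<pi> ` supp x"
    using supp_least supports_img[OF supp_supports assms] by simp
  have "supp x \<subseteq> inv \<pi> ` supp (act \<pi> x)"
    using supp_least[of "inv \<pi> ` supp (act \<pi> x)" x]
      supports_img[OF supp_supports aut_inv[OF assms], of "act \<pi> x"] assms by simp
  thus "\<pi> ` supp x \<subseteq> supp (act \<pi> x)"
    using assms by (auto simp: image_iff)
qed

lemma supp_agree: "aut \<pi> \<Longrightarrow> aut \<sigma> \<Longrightarrow> \<forall>s\<in>supp x. \<pi> s = \<sigma> s \<Longrightarrow> act \<pi> x = act \<sigma> x"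
  using supports_agree supp_supports by blast

end

lemma finite_image_key:
  assumes "finite (g ` Y)" "\<And>y1 y2. y1 \<in> Y \<Longrightarrow> y2 \<in> Y \<Longrightarrow> g y1 = g y2 \<Longrightarrow> f y1 = f y2"
  shows "finite (f ` Y) \<and> card (f ` Y) \<le> card (g ` Y)"
proof -
  define h where "h k = f (SOME y. y \<in> Y \<and> g y = k)" for k
  have "f ` Y = h ` (g ` Y)"
  proof (intro equalityI subsetI)
    fix z assume "z \<in> f ` Y"
    then obtain y where y: "y \<in> Y" "z = f y" by auto
    have "\<exists>y'. y' \<in> Y \<and> g y' = g y" using y by blast
    hence "(SOME y'. y' \<in> Y \<and> g y' = g y) \<in> Y \<and> g (SOME y'. y' \<in> Y \<and> g y' = g y) = g y"
      by (rule someI_ex)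
    hence "h (g y) = f y" using assms(2) y unfolding h_def by metis
    thus "z \<in> h ` (g ` Y)" using y by force
  next
    fix z assume "z \<in> h ` (g ` Y)"
    then obtain y where y: "y \<in> Y" "z = h (g y)" by auto
    have "\<exists>y'. y' \<in> Y \<and> g y' = g y" using y by blast
    hence "(SOME y'. y' \<in> Y \<and> g y' = g y) \<in> Y \<and> g (SOME y'. y' \<in> Y \<and> g y' = g y) = g y"
      by (rule someI_ex)
    thus "z \<in> f ` Y" using y unfolding h_def by blast
  qed
  thus ?thesis using assms(1) by (simp add: card_image_le)
qed

context nom begin

lemma orb_self: "y \<in> orbit act C y"
  unfolding orbit_def by (auto intro!: exI[of _ id])

lemma orb_act: "fixing C \<pi> \<Longrightarrow> act \<pi> y \<in> orbit act C y"
  unfolding orbit_def by blast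

lemma orb_eq: assumes "z \<in> orbit act C y" shows "orbit act C z = orbit act C y"
proof -
  obtain \<pi> where \<pi>: "fixing C \<pi>" "z = act \<pi> y" using assms unfolding orbit_def by blast
  have a: "aut \<pi>" using \<pi> fixing_aut by blast
  show ?thesis
  proof
    show "orbit act C z \<subseteq> orbit act C y"
    proof
      fix w assume "w \<in> orbit act C z"
      then obtain \<sigma> where \<sigma>: "fixing C \<sigma>" "w = act \<sigma> z" unfolding orbit_def by blast
      have "w = act (\<sigma> \<circ> \<pi>) y"
        using \<pi> \<sigma> a by (simp add: act_comp fixing_aut)
      moreover have "fixing C (\<sigma> \<circ> \<pi>)" using \<pi> \<sigma> fixing_comp by blast
      ultimately show "w \<in> orbit act C y" unfolding orbit_def by blast
    qed
    show "orbit act C y \<subseteq> orbit act C z"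
    proof
      fix w assume "w \<in> orbit act C y"
      then obtain \<sigma> where \<sigma>: "fixing C \<sigma>" "w = act \<sigma> y" unfolding orbit_def by blast
      have "w = act (\<sigma> \<circ> inv \<pi>) z"
        using \<pi> \<sigma> a by (simp add: act_comp fixing_aut aut_inv)
      moreover have "fixing C (\<sigma> \<circ> inv \<pi>)" using \<pi> \<sigma> fixing_comp fixing_inv by blast
      ultimately show "w \<in> orbit act C z" unfolding orbit_def by blast
    qed
  qed
qed

lemma orb_disj: "w \<in> orbit act C y \<Longrightarrow> w \<in> orbit act C z \<Longrightarrow> orbit act C y = orbit act C z"
  using orb_eq by metis

lemma orb_mono: "C \<subseteq> D \<Longrightarrow> orbit act D y \<subseteq> orbit act C y"
  unfolding orbit_def using fixing_mono by blast

lemma orb_img: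
  assumes "aut \<pi>"
  shows "act \<pi> ` orbit act C y = orbit act (\<pi> ` C) (act \<pi> y)"
proof
  show "act \<pi> ` orbit act C y \<subseteq> orbit act (\<pi> ` C) (act \<pi> y)"
  proof
    fix w assume "w \<in> act \<pi> ` orbit act C y"
    then obtain \<sigma> where \<sigma>: "fixing C \<sigma>" "w = act \<pi> (act \<sigma> y)" unfolding orbit_def by blast
    have f: "fixing (\<pi> ` C) (\<pi> \<circ> \<sigma> \<circ> inv \<pi>)" using fixing_conj[OF \<sigma>(1) assms] .
    have as: "aut \<sigma>" using \<sigma>(1) fixing_aut by blast
    have "act (\<pi> \<circ> \<sigma> \<circ> inv \<pi>) (act \<pi> y) = act \<pi> (act \<sigma> (act (inv \<pi>) (act \<pi> y)))"
      using assms as by (simp add: act_comp aut_comp aut_inv)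
    hence "w = act (\<pi> \<circ> \<sigma> \<circ> inv \<pi>) (act \<pi> y)" using \<sigma>(2) assms by simp
    thus "w \<in> orbit act (\<pi> ` C) (act \<pi> y)" using f unfolding orbit_def by blast
  qed
  show "orbit act (\<pi> ` C) (act \<pi> y) \<subseteq> act \<pi> ` orbit act C y"
  proof
    fix w assume "w \<in> orbit act (\<pi> ` C) (act \<pi> y)"
    then obtain \<tau> where \<tau>: "fixing (\<pi> ` C) \<tau>" "w = act \<tau> (act \<pi> y)" unfolding orbit_def by blast
    have ai: "aut (inv \<pi>)" using aut_inv[OF assms] .
    have f: "fixing (inv \<pi> ` (\<pi> ` C)) (inv \<pi> \<circ> \<tau> \<circ> inv (inv \<pi>))" using fixing_conj[OF \<tau>(1) ai] .
    have ii: "inv (inv \<pi>) = \<pi>" using assms aut_bij inv_inv_eq by blast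
    have ic: "inv \<pi> ` (\<pi> ` C) = C" using assms by (simp add: image_comp)
    have f': "fixing C (inv \<pi> \<circ> \<tau> \<circ> \<pi>)" using f ii ic by simp
    have at: "aut \<tau>" using \<tau>(1) fixing_aut by blast
    have "act \<pi> (act (inv \<pi> \<circ> \<tau> \<circ> \<pi>) y) = act \<pi> (act (inv \<pi>) (act \<tau> (act \<pi> y)))"
      using assms at by (simp add: act_comp aut_comp aut_inv)
    hence "act \<pi> (act (inv \<pi> \<circ> \<tau> \<circ> \<pi>) y) = act \<tau> (act \<pi> y)" using assms by simp
    moreover have m: "act (inv \<pi> \<circ> \<tau> \<circ> \<pi>) y \<in> orbit act C y" using orb_act[OF f'] .
    ultimately show "w \<in> act \<pi> ` orbit act C y" using \<tau>(2) by (metis image_eqI)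
  qed
qed

end

locale fx = nom act for act :: "(rat \<Rightarrow> rat) \<Rightarrow> 'x \<Rightarrow> 'x" +
  fixes X :: "'x set" and A :: "rat set"
  assumes fA: "finite A" and sX: "supports_set act A X" and oX: "finite (orbit act A ` X)"
begin

lemma X_img: "A \<subseteq> C \<Longrightarrow> fixing C \<pi> \<Longrightarrow> act \<pi> ` X = X"
  using sX fixing_mono unfolding supports_set_def by blast

lemma X_inv: assumes "A \<subseteq> C" "fixing C \<pi>" "y \<in> X" shows "act \<pi> y \<in> X"
proof -
  have "act \<pi> y \<in> act \<pi> ` X" using assms(3) by (rule imageI)
  thus ?thesis using X_img[OF assms(1,2)] by simp
qed

lemma orb_sub: assumes "A \<subseteq> C" "y \<in> X" shows "orbit act C y \<subseteq> X"
proof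
  fix w assume "w \<in> orbit act C y"
  then obtain \<pi> where "fixing C \<pi>" "w = act \<pi> y" unfolding orbit_def by blast
  thus "w \<in> X" using X_inv assms by simp
qed

definition pos :: "rat set \<Rightarrow> rat \<Rightarrow> rat set \<times> rat set" where
  "pos C t = ({c\<in>C. c < t}, {c\<in>C. c \<le> t})"

lemma pos_eq_cmp:
  assumes "pos C t = pos C t'" "c \<in> C"
  shows "(t < c \<longleftrightarrow> t' < c) \<and> (c < t \<longleftrightarrow> c < t')"
proof -
  have e1: "{c\<in>C. c < t} = {c\<in>C. c < t'}" and e2: "{c\<in>C. c \<le> t} = {c\<in>C. c \<le> t'}"
    using assms(1) unfolding pos_def by simp_all
  have "c < t \<longleftrightarrow> c < t'" using e1 assms(2) by blast
  moreover have "c \<le> t \<longleftrightarrow> c \<le> t'" using e2 assms(2) by blast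
  hence "t < c \<longleftrightarrow> t' < c" by (metis not_le)
  ultimately show ?thesis by blast
qed

definition rep :: "'x set \<Rightarrow> 'x" where
  "rep Ob = (SOME x. x \<in> X \<and> orbit act A x = Ob)"

lemma rep: assumes "y \<in> X" shows "rep (orbit act A y) \<in> X \<and> orbit act A (rep (orbit act A y)) = orbit act A y"
proof -
  have "\<exists>x. x \<in> X \<and> orbit act A x = orbit act A y" using assms by blast
  thus ?thesis unfolding rep_def by (rule someI_ex)
qed

definition okey :: "rat set \<Rightarrow> 'x \<Rightarrow> 'x set \<times> (rat \<times> rat set \<times> rat set) set set" where
  "okey C y = (orbit act A y, {(\<lambda>t. (t, pos C (\<pi> t))) ` (supp (rep (orbit act A y))) | \<pi>.
       fixing A \<pi> \<and> act \<pi> (rep (orbit act A y)) = y})"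

lemma okey_finite:
  assumes "finite C"
  shows "finite (okey C ` X)"
proof -
  have "okey C y \<in> Sigma (orbit act A ` X) (\<lambda>Ob. Pow (Pow (supp (rep Ob) \<times> (Pow C \<times> Pow C))))"
    if y: "y \<in> X" for y
  proof -
    have 1: "orbit act A y \<in> orbit act A ` X" using y by blast
    have 2: "{(\<lambda>t. (t, pos C (\<pi> t))) ` supp (rep (orbit act A y)) |\<pi>. fixing A \<pi> \<and> act \<pi> (rep (orbit act A y)) = y}
      \<in> Pow (Pow (supp (rep (orbit act A y)) \<times> (Pow C \<times> Pow C)))"
    proof (rule PowI, rule subsetI)
      fix G assume "G \<in> {(\<lambda>t. (t, pos C (\<pi> t))) ` supp (rep (orbit act A y)) |\<pi>. fixing A \<pi> \<and> act \<pi> (rep (orbit act A y)) = y}"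
      then obtain \<pi> where G: "G = (\<lambda>t. (t, pos C (\<pi> t))) ` supp (rep (orbit act A y))" by blast
      have "pos C u \<in> Pow C \<times> Pow C" for u unfolding pos_def by auto
      thus "G \<in> Pow (supp (rep (orbit act A y)) \<times> (Pow C \<times> Pow C))" unfolding G by blast
    qed
    show ?thesis unfolding okey_def mem_Sigma_iff using 1 2 by blast
  qed
  hence "okey C ` X \<subseteq> Sigma (orbit act A ` X) (\<lambda>Ob. Pow (Pow (supp (rep Ob) \<times> (Pow C \<times> Pow C))))"
    by blast
  moreover have "finite (Sigma (orbit act A ` X) (\<lambda>Ob. Pow (Pow (supp (rep Ob) \<times> (Pow C \<times> Pow C)))))"
    using oX assms by (intro finite_SigmaI finite_Pow_iff[THEN iffD2] finite_cartesian_product) auto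
  ultimately show ?thesis by (rule finite_subset)
qed

lemma okey_orbit:
  assumes C: "finite C" and y: "y1 \<in> X" "y2 \<in> X" and k: "okey C y1 = okey C y2"
  shows "orbit act C y1 = orbit act C y2"
proof -
  have Ob: "orbit act A y1 = orbit act A y2" using k by (simp add: okey_def)
  define x where "x = rep (orbit act A y1)"
  have x: "x \<in> X" "orbit act A x = orbit act A y1" using rep[OF y(1)] by (auto simp: x_def)
  have "y1 \<in> orbit act A x" using x orb_self by blast
  then obtain \<pi>1 where \<pi>1: "fixing A \<pi>1" "act \<pi>1 x = y1" unfolding orbit_def by blast
  have "(\<lambda>t. (t, pos C (\<pi>1 t))) ` (supp x) \<in> snd (okey C y1)"
    unfolding okey_def x_def[symmetric] using \<pi>1 by auto
  hence "(\<lambda>t. (t, pos C (\<pi>1 t))) ` (supp x) \<in> snd (okey C y2)" using k by simp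
  then obtain \<pi>2 where \<pi>2: "fixing A \<pi>2" "act \<pi>2 x = y2"
    "(\<lambda>t. (t, pos C (\<pi>1 t))) ` (supp x) = (\<lambda>t. (t, pos C (\<pi>2 t))) ` (supp x)"
    unfolding okey_def Ob[symmetric] x_def[symmetric] by auto
  have pe: "pos C (\<pi>1 t) = pos C (\<pi>2 t)" if "t \<in> supp x" for t
  proof -
    have "(t, pos C (\<pi>1 t)) \<in> (\<lambda>t. (t, pos C (\<pi>2 t))) ` (supp x)" using \<pi>2(3) that by blast
    thus ?thesis by auto
  qed
  have a1: "aut \<pi>1" and a2: "aut \<pi>2" using \<pi>1 \<pi>2 fixing_aut by blast+
  define \<pi> where "\<pi> = \<pi>2 \<circ> inv \<pi>1"
  have a: "aut \<pi>" unfolding \<pi>_def using a1 a2 by (simp add: aut_comp aut_inv)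
  have cond: "\<forall>t\<in>\<pi>1 ` supp x. \<forall>c\<in>C. (t < c \<longleftrightarrow> \<pi> t < c) \<and> (c < t \<longleftrightarrow> c < \<pi> t)"
  proof (intro ballI)
    fix t c assume t: "t \<in> \<pi>1 ` supp x" and c: "c \<in> C"
    then obtain u where u: "u \<in> supp x" "t = \<pi>1 u" by blast
    have "\<pi> t = \<pi>2 u" using u a1 by (simp add: \<pi>_def)
    thus "(t < c \<longleftrightarrow> \<pi> t < c) \<and> (c < t \<longleftrightarrow> c < \<pi> t)" using pos_eq_cmp[OF pe[OF u(1)] c] u by simp
  qed
  obtain \<rho> where \<rho>: "fixing C \<rho>" "\<forall>t\<in>\<pi>1 ` supp x. \<rho> t = \<pi> t"
    using extend_rel[OF C _ a cond] by auto
  have s1: "supp y1 = \<pi>1 ` supp x" using supp_act[OF a1] \<pi>1(2)[symmetric] by simp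
  have "act \<rho> y1 = act \<pi> y1"
    using supp_agree[of \<rho> \<pi> y1] \<rho> a s1 fixing_aut by blast
  also have "\<dots> = y2" using a1 a2 \<pi>1(2)[symmetric] \<pi>2(2) by (simp add: \<pi>_def act_comp aut_inv)
  finally have "y2 \<in> orbit act C y1" using orb_act[OF \<rho>(1)] by metis
  thus ?thesis using orb_eq by metis
qed

lemma orbits_finite:
  assumes "finite C"
  shows "finite (orbit act C ` X)"
  using finite_image_key[OF okey_finite[OF assms], of "orbit act C"] okey_orbit[OF assms] by blast

end

definition rk :: "rat set \<Rightarrow> rat \<Rightarrow> nat" where
  "rk C t = 2 * card {c\<in>C. c < t} + (if t \<in> C then 1 else 0)"

lemma rk_split:
  assumes "finite C" "c \<in> C"
  shows "rk C x = rk (C - {c}) x + (if c < x then 2 else 0) + (if x = c then 1 else 0)"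
proof (cases "c < x")
  case True
  have e: "{d\<in>C. d < x} = insert c {d\<in>C - {c}. d < x}" using assms True by auto
  have "card {d\<in>C. d < x} = Suc (card {d\<in>C - {c}. d < x})"
    unfolding e using assms(1) by (intro card_insert_disjoint) auto
  moreover have "x \<noteq> c" using True by auto
  moreover have "x \<in> C \<longleftrightarrow> x \<in> C - {c}" using True by auto
  ultimately show ?thesis using True unfolding rk_def by simp
next
  case False
  have e: "{d\<in>C. d < x} = {d\<in>C - {c}. d < x}" using False by auto
  show ?thesis unfolding rk_def e using False assms(2) by auto
qed

lemma rk_fix:
  assumes "fixing C \<pi>"
  shows "rk C (\<pi> t) = rk C t"
proof -
  have a: "aut \<pi>" using assms fixing_aut by blast
  have l: "c < \<pi> t \<longleftrightarrow> c < t" if "c \<in> C" for c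
    using aut_strict[OF a, of c t] fixing_fix[OF assms that] by simp
  have "{c\<in>C. c < \<pi> t} = {c\<in>C. c < t}" using l by blast
  moreover have "\<pi> t \<in> C \<longleftrightarrow> t \<in> C"
  proof
    assume "\<pi> t \<in> C"
    hence "\<pi> (\<pi> t) = \<pi> t" using fixing_fix[OF assms] by blast
    hence "\<pi> t = t" using aut_eq[OF a] by blast
    thus "t \<in> C" using \<open>\<pi> t \<in> C\<close> by simp
  next
    assume "t \<in> C" thus "\<pi> t \<in> C" using fixing_fix[OF assms] by simp
  qed
  ultimately show ?thesis unfolding rk_def by simp
qed

lemma rk_strict:
  assumes "finite C" "c \<in> C" "a \<le> c" "c < b"
  shows "rk C a < rk C b"
proof -
  have s: "{d\<in>C. d < a} \<subseteq> {d\<in>C. d < b}" using assms(3,4) by force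
  have "c \<in> {d\<in>C. d < b}" "c \<notin> {d\<in>C. d < a}" using assms by auto
  hence "{d\<in>C. d < a} \<subset> {d\<in>C. d < b}" using s by blast
  hence "card {d\<in>C. d < a} < card {d\<in>C. d < b}" using assms(1) by (intro psubset_card_mono) auto
  thus ?thesis unfolding rk_def by auto
qed

definition covers :: "rat set \<Rightarrow> rat \<Rightarrow> rat \<Rightarrow> bool" where
  "covers D t c \<longleftrightarrow> t \<le> c \<and> (\<forall>d\<in>D. d < c \<longrightarrow> d < t)"

lemma covers_img:
  assumes "aut \<pi>" shows "covers (\<pi> ` D) (\<pi> t) (\<pi> c) = covers D t c"
  unfolding covers_def using aut_le[OF assms, symmetric] aut_strict[OF assms, symmetric] by auto

context fx begin

definition P :: "rat set \<Rightarrow> 'x \<Rightarrow> nat" where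
  "P C y = (\<Sum>t\<in>supp y. rk C t)"

definition basic :: "rat set \<Rightarrow> 'x \<Rightarrow> bool" where
  "basic D y \<longleftrightarrow> (\<forall>c\<in>D - A. \<exists>t\<in>supp y. covers D t c)"

definition cov :: "rat set \<Rightarrow> rat set \<Rightarrow> rat set" where
  "cov C S = {c\<in>C - A. \<exists>t\<in>S. covers C t c}"

lemma P_act:
  assumes "aut \<pi>" shows "P C (act \<pi> y) = (\<Sum>t\<in>supp y. rk C (\<pi> t))"
  unfolding P_def supp_act[OF assms] using aut_inj[OF assms]
  by (simp add: sum.reindex inj_on_def)

lemma basic_img:
  assumes "fixing A \<pi>" "basic D y"
  shows "basic (\<pi> ` D) (act \<pi> y)"
  unfolding basic_def
proof
  have a: "aut \<pi>" using assms fixing_aut by blast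
  fix c' assume c': "c' \<in> \<pi> ` D - A"
  then obtain c where c: "c \<in> D" "c' = \<pi> c" by blast
  have "c \<notin> A" using c c' assms(1) by (auto simp: fixing_def)
  then obtain t where t: "t \<in> supp y" "covers D t c" using assms(2) c unfolding basic_def by blast
  have "\<pi> t \<in> supp (act \<pi> y)" using t supp_act[OF a] by simp
  moreover have "covers (\<pi> ` D) (\<pi> t) c'" using covers_img[OF a] t c by simp
  ultimately show "\<exists>t\<in>supp (act \<pi> y). covers (\<pi> ` D) t c'" by blast
qed

lemma cov_fix:
  assumes "fixing C \<pi>" shows "cov C (\<pi> ` S) = cov C S"
proof -
  have a: "aut \<pi>" using assms fixing_aut by blast
  have iC: "\<pi> ` C = C" using assms by (force simp: fixing_def)
  have "covers C (\<pi> t) c = covers C t c" if "c \<in> C" for t c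
    using covers_img[OF a, of C t c] iC fixing_fix[OF assms that] by simp
  thus ?thesis unfolding cov_def by auto
qed

lemma rk_drop:
  assumes C: "finite C" and c: "c \<in> C" and \<pi>: "fixing (C - {c}) \<pi>"
    and unc: "\<not> (\<exists>t\<in>supp y. covers C t c)"
    and notin: "act \<pi> y \<notin> orbit act C y"
  shows "P C (act \<pi> y) < P C y"
proof -
  have a: "aut \<pi>" using \<pi> fixing_aut by blast
  define same where "same t \<longleftrightarrow> (t < c \<longleftrightarrow> \<pi> t < c) \<and> (c < t \<longleftrightarrow> c < \<pi> t)" for t
  have key: "rk C (\<pi> t) \<le> rk C t \<and> (\<not> same t \<longrightarrow> rk C (\<pi> t) < rk C t)" if t: "t \<in> supp y" for t
  proof -
    have r1: "rk C (\<pi> t) = rk (C - {c}) t + (if c < \<pi> t then 2 else 0) + (if \<pi> t = c then 1 else 0)"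
      using rk_split[OF C c, of "\<pi> t"] rk_fix[OF \<pi>] by simp
    have r2: "rk C t = rk (C - {c}) t + (if c < t then 2 else 0) + (if t = c then 1 else 0)"
      using rk_split[OF C c] by simp
    show ?thesis
    proof (cases "\<exists>d\<in>C. d < c \<and> t \<le> d")
      case True
      then obtain d where d: "d \<in> C" "d < c" "t \<le> d" by blast
      have "\<pi> d = d" using d \<pi> by (auto simp: fixing_def)
      hence "\<pi> t \<le> d" using d aut_le[OF a] by metis
      hence "same t" "t < c" "\<pi> t < c" using d by (auto simp: same_def)
      thus ?thesis using r1 r2 by auto
    next
      case False
      hence "\<forall>d\<in>C. d < c \<longrightarrow> d < t" by auto
      hence "c < t" using unc t unfolding covers_def by force
      thus ?thesis using r1 r2 unfolding same_def by auto
    qed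
  qed
  have ex: "\<exists>t\<in>supp y. \<not> same t"
  proof (rule ccontr)
    assume "\<not> (\<exists>t\<in>supp y. \<not> same t)"
    hence allsame: "\<forall>t\<in>supp y. same t" by blast
    have "\<forall>t\<in>supp y. \<forall>d\<in>C. (t < d \<longleftrightarrow> \<pi> t < d) \<and> (d < t \<longleftrightarrow> d < \<pi> t)"
    proof (intro ballI)
      fix t d assume t: "t \<in> supp y" and d: "d \<in> C"
      show "(t < d \<longleftrightarrow> \<pi> t < d) \<and> (d < t \<longleftrightarrow> d < \<pi> t)"
      proof (cases "d = c")
        case True then show ?thesis using allsame t by (simp add: same_def)
      next
        case False
        hence "\<pi> d = d" using d \<pi> by (auto simp: fixing_def)
        thus ?thesis using aut_strict[OF a, of t d] aut_strict[OF a, of d t] by simp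
      qed
    qed
    then obtain \<rho> where \<rho>: "fixing C \<rho>" "\<forall>t\<in>supp y. \<rho> t = \<pi> t"
      using extend_rel[OF C supp_finite a] by blast
    have "act \<rho> y = act \<pi> y" using supp_agree[of \<rho> \<pi> y] \<rho> a fixing_aut by blast
    thus False using notin orb_act[OF \<rho>(1), of y] by simp
  qed
  have "(\<Sum>t\<in>supp y. rk C (\<pi> t)) < (\<Sum>t\<in>supp y. rk C t)"
    using key ex by (intro sum_strict_mono_ex1) auto
  thus ?thesis using P_act[OF a] unfolding P_def by simp
qed

lemma P_bound:
  assumes "aut \<pi>" "finite C"
  shows "P C (act \<pi> y) \<le> card (supp y) * (2 * card C + 1)"
proof -
  have "rk C t \<le> 2 * card C + 1" for t
  proof -
    have "card {c\<in>C. c < t} \<le> card C" using assms(2) by (intro card_mono) auto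
    thus ?thesis unfolding rk_def by auto
  qed
  hence "(\<Sum>t\<in>supp y. rk C (\<pi> t)) \<le> (\<Sum>t\<in>supp y. 2 * card C + 1)" by (intro sum_mono) auto
  thus ?thesis unfolding P_act[OF assms(1)] by simp
qed

lemma bump:
  assumes C: "finite C" and fD: "finite D" and ts: "ts \<in> supp y" and tD: "ts \<notin> D"
    and rF: "r \<notin> D \<union> (supp y - {ts})"
    and cell: "\<forall>f\<in>D \<union> (supp y - {ts}). f < ts \<longleftrightarrow> f < r"
    and c: "c \<in> C" "ts \<le> c" "c < r"
  shows "\<exists>y'\<in>orbit act D y. P C y < P C y'"
proof -
  have tF: "ts \<notin> D \<union> (supp y - {ts})" using tD by auto
  obtain \<sigma> where \<sigma>: "fixing (D \<union> (supp y - {ts})) \<sigma>" "\<sigma> ts = r"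
    using move[OF _ tF rF cell] fD by auto
  have a: "aut \<sigma>" using \<sigma> fixing_aut by blast
  have y': "act \<sigma> y \<in> orbit act D y" using orb_act fixing_mono[OF \<sigma>(1)] by blast
  have e: "supp y = insert ts (supp y - {ts})" using ts by auto
  have "\<sigma> ` (supp y - {ts}) = supp y - {ts}" using \<sigma>(1) by (force simp: fixing_def)
  hence s': "supp (act \<sigma> y) = insert r (supp y - {ts})"
    using supp_act[OF a] \<sigma>(2) e by (metis image_insert)
  have rn: "r \<notin> supp y - {ts}" using rF by auto
  have "P C (act \<sigma> y) = rk C r + (\<Sum>t\<in>supp y - {ts}. rk C t)"
    unfolding P_def s' using rn by simp
  moreover have "P C y = rk C ts + (\<Sum>t\<in>supp y - {ts}. rk C t)"
    unfolding P_def by (rule sum.remove[OF supp_finite ts])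
  moreover have "rk C ts < rk C r" using rk_strict[OF C c] .
  ultimately have "P C y < P C (act \<sigma> y)" by linarith
  thus ?thesis using y' by blast
qed

lemma max_cover:
  assumes "t \<in> supp y" "covers D t c"
  shows "Max {u\<in>supp y. u \<le> c} \<in> supp y \<and> covers D (Max {u\<in>supp y. u \<le> c}) c
     \<and> (\<forall>u\<in>supp y. u \<le> c \<longrightarrow> u \<le> Max {u\<in>supp y. u \<le> c})"
proof -
  let ?M = "Max {u\<in>supp y. u \<le> c}"
  have ne: "{u\<in>supp y. u \<le> c} \<noteq> {}" "finite {u\<in>supp y. u \<le> c}" using assms unfolding covers_def by auto
  have M: "?M \<in> {u\<in>supp y. u \<le> c}" using Max_in[OF ne(2,1)] .
  have ge: "\<forall>u\<in>supp y. u \<le> c \<longrightarrow> u \<le> ?M" using Max_ge[OF ne(2)] by blast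
  have "t \<le> ?M" using ge assms unfolding covers_def by auto
  hence "covers D ?M c" using M assms(2) unfolding covers_def by force
  thus ?thesis using M ge by auto
qed

definition Psi :: "rat set \<Rightarrow> 'x \<Rightarrow> rat set" where
  "Psi C y = A \<union> cov C (supp y)"

lemma surj_key:
  assumes C: "finite C" and AD: "A \<subseteq> D" and DC: "D \<subseteq> C" and y0: "y0 \<in> X" and b: "basic D y0"
  shows "\<exists>y\<in>orbit act D y0. Psi C y = D"
proof -
  have fD: "finite D" using C DC finite_subset by blast
  define Y where "Y = orbit act D y0"
  have Yne: "y0 \<in> Y" using orb_self Y_def by blast
  have bound: "P C z \<le> card (supp y0) * (2 * card C + 1)" if zY: "z \<in> Y" for z
  proof -
    obtain \<pi> where "fixing D \<pi>" "z = act \<pi> y0" using zY unfolding Y_def orbit_def by blast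
    thus ?thesis using P_bound[OF _ C, of \<pi> y0] fixing_aut by blast
  qed
  have "P C ` Y \<subseteq> {..card (supp y0) * (2 * card C + 1)}" using bound by blast
  hence fin: "finite (P C ` Y)" using finite_subset by blast
  have "Max (P C ` Y) \<in> P C ` Y" using Max_in[OF fin] Yne by blast
  then obtain y where y: "y \<in> Y" "P C y = Max (P C ` Y)" by (metis imageE)
  have ymax: "\<not> P C y < P C y'" if "y' \<in> orbit act D y" for y'
  proof -
    have "orbit act D y = Y" using orb_eq y(1) Y_def by blast
    hence "y' \<in> Y" using that by simp
    hence "P C y' \<le> P C y" using y fin by simp
    thus ?thesis by simp
  qed
  have by': "basic D y"
  proof -
    obtain \<pi> where \<pi>: "fixing D \<pi>" "y = act \<pi> y0" using y(1) unfolding Y_def orbit_def by blast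
    have "\<pi> ` D = D" using \<pi>(1) by (force simp: fixing_def)
    thus ?thesis using basic_img[OF fixing_mono[OF \<pi>(1) AD] b] \<pi>(2) by simp
  qed
  have sub1: "cov C (supp y) \<subseteq> D"
  proof
    fix c assume "c \<in> cov C (supp y)"
    then obtain t where c: "c \<in> C" "c \<notin> A" "t \<in> supp y" "covers C t c" unfolding cov_def by blast
    show "c \<in> D"
    proof (rule ccontr)
      assume cD: "c \<notin> D"
      define ts where "ts = Max {u\<in>supp y. u \<le> c}"
      have ts: "ts \<in> supp y" "covers C ts c" "\<forall>u\<in>supp y. u \<le> c \<longrightarrow> u \<le> ts"
        using max_cover[OF c(3,4)] unfolding ts_def by blast+
      have tsc: "ts \<le> c" using ts(2) unfolding covers_def by blast
      have tsD: "ts \<notin> D"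
      proof
        assume "ts \<in> D"
        hence "ts \<noteq> c" using cD by blast
        hence "ts < c" using tsc by simp
        thus False using ts(2) \<open>ts \<in> D\<close> DC unfolding covers_def by blast
      qed
      define F where "F = D \<union> (supp y - {ts})"
      have fF: "finite F" using fD by (simp add: F_def)
      have above: "c < f" if "f \<in> F" "ts < f" for f
      proof (cases "f \<in> D")
        case True
        hence "f \<noteq> c" using cD by blast
        moreover have "\<not> f < c" using ts(2) True DC that(2) unfolding covers_def by force
        ultimately show ?thesis by simp
      next
        case False
        hence "f \<in> supp y" using that(1) by (simp add: F_def)
        thus ?thesis using ts(3) that(2) by force
      qed
      have cF: "c \<notin> F"
      proof
        assume "c \<in> F"
        hence "c \<in> supp y" "c \<noteq> ts" using cD by (auto simp: F_def)
        thus False using ts(3) tsc by force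
      qed
      obtain r where r: "c < r" "r \<notin> F" "\<forall>f\<in>F. f < c \<longleftrightarrow> f < r" using cell_above[OF fF cF] by blast
      have cell: "\<forall>f\<in>F. f < ts \<longleftrightarrow> f < r"
      proof
        fix f assume f: "f \<in> F"
        have "f \<noteq> ts" using f tsD by (auto simp: F_def)
        show "f < ts \<longleftrightarrow> f < r"
        proof
          assume "f < ts" thus "f < r" using tsc r by auto
        next
          assume "f < r"
          hence "f < c" using r f by blast
          thus "f < ts" using above[OF f] \<open>f \<noteq> ts\<close> by force
        qed
      qed
      obtain y' where "y' \<in> orbit act D y" "P C y < P C y'"
        using bump[OF C fD ts(1) tsD r(2)[unfolded F_def] cell[unfolded F_def] c(1) tsc r(1)] by blast
      thus False using ymax by blast
    qed
  qed
  have sub2: "D - A \<subseteq> cov C (supp y)"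
  proof
    fix d assume dDA: "d \<in> D - A"
    then obtain t where t: "t \<in> supp y" "covers D t d" using by' unfolding basic_def by blast
    define ts where "ts = Max {u\<in>supp y. u \<le> d}"
    have ts: "ts \<in> supp y" "covers D ts d" "\<forall>u\<in>supp y. u \<le> d \<longrightarrow> u \<le> ts"
      using max_cover[OF t] unfolding ts_def by blast+
    have tsd: "ts \<le> d" using ts(2) unfolding covers_def by blast
    show "d \<in> cov C (supp y)"
    proof (rule ccontr)
      assume nc: "d \<notin> cov C (supp y)"
      have "\<not> covers C ts d" using nc dDA DC ts(1) unfolding cov_def by blast
      then obtain c0 where c0: "c0 \<in> C" "c0 < d" "ts \<le> c0" using tsd unfolding covers_def by force
      define Cs where "Cs = {c\<in>C. ts \<le> c \<and> c < d}"
      have Csne: "Cs \<noteq> {}" "finite Cs" using c0 C by (auto simp: Cs_def)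
      define cs where "cs = Max Cs"
      have cs: "cs \<in> C" "ts \<le> cs" "cs < d" using Max_in[OF Csne(2,1)] by (auto simp: cs_def Cs_def)
      have csmax: "\<forall>c\<in>C. ts \<le> c \<and> c < d \<longrightarrow> c \<le> cs" using Max_ge[OF Csne(2)] by (auto simp: cs_def Cs_def)
      have csD: "cs \<notin> D"
      proof
        assume "cs \<in> D" thus False using ts(2) cs unfolding covers_def by force
      qed
      have tsD: "ts \<notin> D"
      proof
        assume "ts \<in> D"
        hence "ts < ts" using ts(2) cs unfolding covers_def by force
        thus False by simp
      qed
      define F where "F = D \<union> (supp y - {ts})"
      have fF: "finite F" using fD by (simp add: F_def)
      have csF: "cs \<notin> F"
      proof
        assume "cs \<in> F"
        hence "cs \<in> supp y" "cs \<noteq> ts" using csD by (auto simp: F_def)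
        thus False using ts(3) cs by force
      qed
      obtain r where r: "cs < r" "r \<notin> F" "\<forall>f\<in>F. f < cs \<longleftrightarrow> f < r" using cell_above[OF fF csF] by blast
      have cell: "\<forall>f\<in>F. f < ts \<longleftrightarrow> f < r"
      proof
        fix f assume f: "f \<in> F"
        have "f \<noteq> ts" using f tsD by (auto simp: F_def)
        show "f < ts \<longleftrightarrow> f < r"
        proof
          assume "f < ts" thus "f < r" using cs r by auto
        next
          assume "f < r"
          hence fcs: "f < cs" using r f by blast
          show "f < ts"
          proof (cases "f \<in> D")
            case True thus ?thesis using ts(2) fcs cs unfolding covers_def by force
          next
            case False
            hence "f \<in> supp y" using f by (simp add: F_def)
            thus ?thesis using ts(3) fcs cs \<open>f \<noteq> ts\<close> by force
          qed
        qed
      qed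
      obtain y' where "y' \<in> orbit act D y" "P C y < P C y'"
        using bump[OF C fD ts(1) tsD r(2)[unfolded F_def] cell[unfolded F_def] cs(1,2) r(1)] by blast
      thus False using ymax by blast
    qed
  qed
  have "Psi C y = D" unfolding Psi_def using sub1 sub2 AD by blast
  thus ?thesis using y(1) Y_def by blast
qed

end

definition ind :: "'a set \<Rightarrow> 'a \<Rightarrow> 'k::field" where
  "ind S = (\<lambda>x. if x \<in> S then 1 else 0)"

lemma vs_fscale: "vector_space (fscale :: 'k::field \<Rightarrow> ('x \<Rightarrow> 'k) \<Rightarrow> ('x \<Rightarrow> 'k))"
  by unfold_locales (auto simp: fscale_def fun_eq_iff algebra_simps)

interpretation V: vector_space "fscale :: 'k::field \<Rightarrow> ('x \<Rightarrow> 'k) \<Rightarrow> ('x \<Rightarrow> 'k)"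
  by (rule vs_fscale)

lemma ind_Union:
  assumes "finite Os" "\<forall>a\<in>Os. \<forall>b\<in>Os. a \<noteq> b \<longrightarrow> a \<inter> b = {}"
  shows "(\<Sum>S\<in>Os. (ind S :: 'a \<Rightarrow> 'k::field)) = ind (\<Union>Os)"
  using assms
proof (induction Os rule: finite_induct)
  case empty
  then show ?case by (simp add: ind_def fun_eq_iff)
next
  case (insert S F)
  have pw: "\<And>a b. a \<in> insert S F \<Longrightarrow> b \<in> insert S F \<Longrightarrow> a \<noteq> b \<Longrightarrow> a \<inter> b = {}"
    using insert.prems by blast
  have d: "S \<inter> \<Union>F = {}"
  proof (rule equals0I)
    fix x assume "x \<in> S \<inter> \<Union>F"
    then obtain T where T: "T \<in> F" "x \<in> T" "x \<in> S" by blast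
    have "S \<noteq> T" using T(1) insert.hyps(2) by blast
    hence "S \<inter> T = {}" using pw[of S T] T(1) by simp
    thus False using T by blast
  qed
  have "\<forall>a\<in>F. \<forall>b\<in>F. a \<noteq> b \<longrightarrow> a \<inter> b = {}" using pw by simp
  hence ih: "(\<Sum>S\<in>F. (ind S :: 'a \<Rightarrow> 'k)) = ind (\<Union>F)"
    using insert.IH by blast
  have "(\<Sum>S\<in>insert S F. (ind S :: 'a \<Rightarrow> 'k)) = ind S + (\<Sum>S\<in>F. (ind S :: 'a \<Rightarrow> 'k))"
    using insert.hyps by (rule sum.insert)
  also have "\<dots> = ind S + ind (\<Union>F)" using ih by simp
  also have "\<dots> = ind (\<Union>(insert S F))"
  proof
    fix x
    show "(ind S + ind (\<Union>F)) x = (ind (\<Union>(insert S F)) :: 'a \<Rightarrow> 'k) x"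
      using d by (cases "x \<in> S") (auto simp: ind_def)
  qed
  finally show ?case .
qed

lemma sum_fscale_apply: "(\<Sum>v\<in>t. fscale (u v) v) x = (\<Sum>v\<in>t. u v * v x)"
  by (simp add: sum_fun_apply fscale_def)

lemma sum_fscale_apply2: "(\<Sum>v\<in>t. fscale (u v) (g v)) x = (\<Sum>v\<in>t. u v * g v x)"
  by (simp add: sum_fun_apply fscale_def)

lemma ind_indep:
  assumes disj: "\<forall>a\<in>Fam. \<forall>b\<in>Fam. a \<noteq> b \<longrightarrow> a \<inter> b = {}" and ne: "{} \<notin> Fam"
  shows "\<not> V.dependent ((ind :: 'a set \<Rightarrow> 'a \<Rightarrow> 'k::field) ` Fam)" and "inj_on (ind :: 'a set \<Rightarrow> 'a \<Rightarrow> 'k) Fam"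
proof -
  show inj: "inj_on (ind :: 'a set \<Rightarrow> 'a \<Rightarrow> 'k) Fam"
  proof
    fix a b assume ab: "a \<in> Fam" "b \<in> Fam" "(ind a :: 'a \<Rightarrow> 'k) = ind b"
    show "a = b"
    proof (rule ccontr)
      assume "a \<noteq> b"
      have "a \<noteq> {}" using ne ab(1) by auto
      then obtain x where "x \<in> a" by blast
      hence "x \<notin> b" using disj ab \<open>a \<noteq> b\<close> by blast
      hence "(ind a :: 'a \<Rightarrow> 'k) x \<noteq> ind b x" using \<open>x \<in> a\<close> by (simp add: ind_def)
      thus False using ab by simp
    qed
  qed
  show "\<not> V.dependent ((ind :: 'a set \<Rightarrow> 'a \<Rightarrow> 'k) ` Fam)"
    unfolding V.dependent_explicit
  proof
    assume "\<exists>t u. finite t \<and> t \<subseteq> (ind :: 'a set \<Rightarrow> 'a \<Rightarrow> 'k) ` Fam \<and> (\<Sum>v\<in>t. fscale (u v) v) = 0 \<and> (\<exists>v\<in>t. u v \<noteq> 0)"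
    then obtain t u v where t: "finite t" "t \<subseteq> (ind :: 'a set \<Rightarrow> 'a \<Rightarrow> 'k) ` Fam"
      "(\<Sum>v\<in>t. fscale (u v) v) = 0" "v \<in> t" "u v \<noteq> 0" by blast
    obtain S where S: "S \<in> Fam" "v = ind S" using t by blast
    have "S \<noteq> {}" using ne S(1) by auto
    then obtain x where x: "x \<in> S" by blast
    have zero: "u w * w x = 0" if w: "w \<in> t - {v}" for w
    proof -
      have "w \<in> ind ` Fam" using w t(2) by blast
      then obtain S' where S': "S' \<in> Fam" "w = ind S'" by blast
      have "S' \<noteq> S"
      proof
        assume "S' = S"
        hence "w = v" using S'(2) S(2) by simp
        thus False using w by simp
      qed
      hence "S' \<inter> S = {}" using disj S'(1) S(1) by blast
      hence "x \<notin> S'" using x by blast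
      thus ?thesis using S'(2) by (simp add: ind_def)
    qed
    have vx: "v x = 1" using S(2) x by (simp add: ind_def)
    have "0 = (\<Sum>v\<in>t. fscale (u v) v) x" using t(3) by simp
    also have "\<dots> = (\<Sum>w\<in>t. u w * w x)" by (rule sum_fscale_apply)
    also have "\<dots> = u v * v x + (\<Sum>w\<in>t - {v}. u w * w x)" by (rule sum.remove[OF t(1) t(4)])
    also have "(\<Sum>w\<in>t - {v}. u w * w x) = 0" using zero by (intro sum.neutral) blast
    also have "u v * v x + 0 = u v" using vx by simp
    finally show False using t by simp
  qed
qed

context nom begin

lemma fun_act_ind: assumes "aut \<pi>" shows "fun_act act \<pi> (ind S) = ind (act \<pi> ` S)"
proof -
  have "act (inv \<pi>) z \<in> S \<longleftrightarrow> z \<in> act \<pi> ` S" for z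
  proof
    assume "act (inv \<pi>) z \<in> S"
    moreover have "z = act \<pi> (act (inv \<pi>) z)" using assms by simp
    ultimately show "z \<in> act \<pi> ` S" by blast
  next
    assume "z \<in> act \<pi> ` S"
    then obtain s where "s \<in> S" "z = act \<pi> s" by blast
    thus "act (inv \<pi>) z \<in> S" using assms by simp
  qed
  thus ?thesis unfolding fun_act_def ind_def by (auto simp: fun_eq_iff)
qed

lemma fun_act_inv: assumes "aut \<pi>" shows "fun_act act \<pi> (fun_act act (inv \<pi>) f) = f"
proof -
  have ii: "inv (inv \<pi>) = \<pi>" using assms aut_bij inv_inv_eq by blast
  show ?thesis unfolding fun_act_def ii using assms by (auto simp: fun_eq_iff)
qed

end

context fx begin

definition SC :: "rat set \<Rightarrow> ('x \<Rightarrow> 'k::field) set" where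
  "SC C = {ind (orbit act D y) | D y. A \<subseteq> D \<and> D \<subseteq> C \<and> y \<in> X \<and> basic D y}"

definition Bset :: "('x \<Rightarrow> 'k::field) set" where
  "Bset = {ind (orbit act D y) | D y. finite D \<and> A \<subseteq> D \<and> y \<in> X \<and> basic D y}"

lemma SC_mono: "C \<subseteq> C' \<Longrightarrow> SC C \<subseteq> SC C'"
  unfolding SC_def by blast

lemma SC_Bset: "finite C \<Longrightarrow> SC C \<subseteq> Bset"
  unfolding SC_def Bset_def using finite_subset by blast

lemma orbits_disj: "\<forall>a\<in>orbit act C ` Y. \<forall>b\<in>orbit act C ` Y. a \<noteq> b \<longrightarrow> a \<inter> b = {}"
  using orb_eq by blast

lemma span_orbit:
  "finite C \<Longrightarrow> A \<subseteq> C \<Longrightarrow> y \<in> X \<Longrightarrow> (ind (orbit act C y) :: 'x \<Rightarrow> 'k::field) \<in> V.span (SC C)"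
proof (induction "card C" arbitrary: C y rule: less_induct)
  case less
  note outer_prems = less.prems and outer_hyps = less.hyps
  have inner: "\<forall>y. y \<in> X \<longrightarrow> P C y = m \<longrightarrow> (ind (orbit act C y) :: 'x \<Rightarrow> 'k) \<in> V.span (SC C)" for m
  proof (induction m rule: less_induct)
    case (less m)
    show ?case
    proof (intro allI impI)
      fix y assume y: "y \<in> X" "P C y = m"
      show "(ind (orbit act C y) :: 'x \<Rightarrow> 'k) \<in> V.span (SC C)"
      proof (cases "basic C y")
        case True
        hence "(ind (orbit act C y) :: 'x \<Rightarrow> 'k) \<in> SC C" using outer_prems y unfolding SC_def by blast
        thus ?thesis by (rule V.span_base)
      next
        case False
        then obtain c where c: "c \<in> C" "c \<notin> A" "\<not> (\<exists>t\<in>supp y. covers C t c)"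
          unfolding basic_def by blast
        define C' where "C' = C - {c}"
        have cpos: "card C > 0" using outer_prems(1) c(1) card_gt_0_iff by blast
        have C': "finite C'" "A \<subseteq> C'" "card C' < card C"
          using outer_prems c cpos by (auto simp: C'_def)
        have ih: "(ind (orbit act C' y) :: 'x \<Rightarrow> 'k) \<in> V.span (SC C)"
          using outer_hyps[OF C'(3) C'(1,2) y(1)] V.span_mono[OF SC_mono[of C' C]]
          by (auto simp: C'_def)
        define Os where "Os = orbit act C ` orbit act C' y"
        have Osfin: "finite Os"
        proof -
          have "Os \<subseteq> orbit act C ` X" using orb_sub[OF C'(2) y(1)] by (auto simp: Os_def)
          thus ?thesis using orbits_finite[OF outer_prems(1)] finite_subset by blast
        qed
        have Un: "\<Union>Os = orbit act C' y"
        proof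
          show "\<Union>Os \<subseteq> orbit act C' y"
          proof
            fix w assume "w \<in> \<Union>Os"
            then obtain z where z: "z \<in> orbit act C' y" "w \<in> orbit act C z" by (auto simp: Os_def)
            have "orbit act C z \<subseteq> orbit act C' z" by (rule orb_mono) (simp add: C'_def)
            thus "w \<in> orbit act C' y" using z orb_eq by blast
          qed
          show "orbit act C' y \<subseteq> \<Union>Os" using orb_self by (auto simp: Os_def)
        qed
        have sumeq: "(\<Sum>Ob\<in>Os. (ind Ob :: 'x \<Rightarrow> 'k)) = ind (orbit act C' y)"
          using ind_Union[OF Osfin] orbits_disj Un unfolding Os_def by metis
        have yOs: "orbit act C y \<in> Os" using orb_self by (auto simp: Os_def)
        have others: "(ind Ob :: 'x \<Rightarrow> 'k) \<in> V.span (SC C)" if Ob: "Ob \<in> Os - {orbit act C y}" for Ob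
        proof -
          obtain z where z: "z \<in> orbit act C' y" "Ob = orbit act C z" using Ob by (auto simp: Os_def)
          obtain \<pi> where \<pi>: "fixing C' \<pi>" "z = act \<pi> y" using z(1) unfolding orbit_def by blast
          have "z \<notin> orbit act C y" using Ob z orb_eq by blast
          hence "P C z < P C y"
            using rk_drop[OF outer_prems(1) c(1) \<pi>(1)[unfolded C'_def] c(3)] \<pi>(2) by simp
          moreover have "z \<in> X" using z(1) orb_sub[OF C'(2) y(1)] by blast
          ultimately show ?thesis using less.IH y(2) z(2) by blast
        qed
        have h: "(ind (orbit act C' y) :: 'x \<Rightarrow> 'k) = ind (orbit act C y) + (\<Sum>Ob\<in>Os - {orbit act C y}. ind Ob)"
          using sumeq sum.remove[OF Osfin yOs, of "ind :: 'x set \<Rightarrow> 'x \<Rightarrow> 'k"] by simp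
        have "(ind (orbit act C y) :: 'x \<Rightarrow> 'k) = ind (orbit act C' y) - (\<Sum>Ob\<in>Os - {orbit act C y}. ind Ob)"
          unfolding h by simp
        moreover have "(\<Sum>Ob\<in>Os - {orbit act C y}. (ind Ob :: 'x \<Rightarrow> 'k)) \<in> V.span (SC C)"
          using others by (intro V.span_sum) blast
        ultimately show ?thesis using ih V.span_diff by metis
      qed
    qed
  qed
  show ?case using inner outer_prems by blast
qed

definition Phi :: "rat set \<Rightarrow> 'x \<Rightarrow> 'x \<Rightarrow> 'k::field" where
  "Phi C y = ind (orbit act (Psi C y) y)"

lemma SC_card:
  assumes C: "finite C" and AC: "A \<subseteq> C"
  shows "finite (SC C :: ('x \<Rightarrow> 'k::field) set) \<and> card (SC C :: ('x \<Rightarrow> 'k) set) \<le> card (orbit act C ` X)"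
proof -
  have const: "(Phi C y1 :: 'x \<Rightarrow> 'k) = Phi C y2" if y: "y1 \<in> X" "y2 \<in> X" "orbit act C y1 = orbit act C y2" for y1 y2
  proof -
    have "y2 \<in> orbit act C y1" using y orb_self by blast
    then obtain \<pi> where \<pi>: "fixing C \<pi>" "y2 = act \<pi> y1" unfolding orbit_def by blast
    have a: "aut \<pi>" using \<pi> fixing_aut by blast
    have ps: "Psi C y2 = Psi C y1" unfolding Psi_def \<pi>(2) supp_act[OF a] cov_fix[OF \<pi>(1)] ..
    have "Psi C y1 \<subseteq> C" unfolding Psi_def cov_def using AC by blast
    hence "y2 \<in> orbit act (Psi C y1) y1" using \<pi> orb_act fixing_mono by metis
    hence "orbit act (Psi C y1) y2 = orbit act (Psi C y1) y1" by (rule orb_eq)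
    thus ?thesis unfolding Phi_def ps by simp
  qed
  have fk: "finite ((Phi C :: 'x \<Rightarrow> 'x \<Rightarrow> 'k) ` X) \<and> card ((Phi C :: 'x \<Rightarrow> 'x \<Rightarrow> 'k) ` X) \<le> card (orbit act C ` X)"
    by (rule finite_image_key[OF orbits_finite[OF C]]) (use const in blast)
  have sub: "(SC C :: ('x \<Rightarrow> 'k) set) \<subseteq> Phi C ` X"
  proof
    fix b assume "b \<in> (SC C :: ('x \<Rightarrow> 'k) set)"
    then obtain D y0 where D: "b = ind (orbit act D y0)" "A \<subseteq> D" "D \<subseteq> C" "y0 \<in> X" "basic D y0"
      unfolding SC_def by blast
    obtain y where y: "y \<in> orbit act D y0" "Psi C y = D" using surj_key[OF C D(2,3,4,5)] by blast
    have "y \<in> X" using y(1) orb_sub[OF D(2,4)] by blast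
    moreover have "Phi C y = b" unfolding Phi_def y(2) D(1) using orb_eq[OF y(1)] by simp
    ultimately show "b \<in> Phi C ` X" by blast
  qed
  show ?thesis using fk sub finite_subset card_mono by (metis le_trans)
qed

lemma SC_indep:
  assumes C: "finite C" and AC: "A \<subseteq> C"
  shows "\<not> V.dependent (SC C :: ('x \<Rightarrow> 'k::field) set)"
proof -
  let ?I = "(ind :: 'x set \<Rightarrow> 'x \<Rightarrow> 'k) ` (orbit act C ` X)"
  have ne: "{} \<notin> orbit act C ` X" using orb_self by blast
  have Iind: "\<not> V.dependent ?I" and inj: "inj_on (ind :: 'x set \<Rightarrow> 'x \<Rightarrow> 'k) (orbit act C ` X)"
    using ind_indep[OF orbits_disj ne] by blast+
  have cI: "card ?I = card (orbit act C ` X)" using card_image[OF inj] .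
  have fS: "finite (SC C :: ('x \<Rightarrow> 'k) set)" and cS: "card (SC C :: ('x \<Rightarrow> 'k) set) \<le> card (orbit act C ` X)"
    using SC_card[OF C AC] by blast+
  obtain B' where B': "B' \<subseteq> (SC C :: ('x \<Rightarrow> 'k) set)" "\<not> V.dependent B'" "SC C \<subseteq> V.span B'"
    using V.maximal_independent_subset by blast
  have "V.span (SC C) \<subseteq> V.span B'" using B'(3) V.span_minimal V.subspace_span by blast
  moreover have "?I \<subseteq> V.span (SC C)" using span_orbit[OF C AC] by blast
  ultimately have "?I \<subseteq> V.span B'" by blast
  moreover have fB': "finite B'" using B'(1) fS finite_subset by blast
  ultimately have "card ?I \<le> card B'" using V.independent_span_bound Iind by blast
  hence "card (SC C :: ('x \<Rightarrow> 'k) set) \<le> card B'" using cI cS by linarith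
  hence "B' = SC C" using B'(1) fS by (meson card_seteq)
  thus ?thesis using B'(2) by simp
qed

lemma basic_D_finite_choice:
  assumes "b \<in> (Bset :: ('x \<Rightarrow> 'k::field) set)"
  shows "\<exists>D. finite D \<and> A \<subseteq> D \<and> b \<in> (SC D :: ('x \<Rightarrow> 'k) set)"
  using assms unfolding Bset_def SC_def by blast

lemma Bset_indep: "\<not> V.dependent (Bset :: ('x \<Rightarrow> 'k::field) set)"
proof
  assume "V.dependent (Bset :: ('x \<Rightarrow> 'k) set)"
  then obtain t u v where t: "finite t" "t \<subseteq> (Bset :: ('x \<Rightarrow> 'k) set)"
    "(\<Sum>v\<in>t. fscale (u v) v) = 0" "v \<in> t" "u v \<noteq> 0"
    unfolding V.dependent_explicit by blast
  define Dof where "Dof b = (SOME D. finite D \<and> A \<subseteq> D \<and> b \<in> (SC D :: ('x \<Rightarrow> 'k) set))" for b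
  have Dof: "finite (Dof b) \<and> A \<subseteq> Dof b \<and> b \<in> SC (Dof b)" if "b \<in> t" for b
    unfolding Dof_def by (rule someI_ex) (use basic_D_finite_choice that t(2) in blast)
  define C where "C = A \<union> \<Union>(Dof ` t)"
  have C: "finite C" "A \<subseteq> C" using t(1) Dof fA by (auto simp: C_def)
  have "t \<subseteq> SC C"
  proof
    fix b assume "b \<in> t"
    hence "b \<in> SC (Dof b)" "Dof b \<subseteq> C" using Dof by (auto simp: C_def)
    thus "b \<in> SC C" using SC_mono by blast
  qed
  hence "V.dependent (SC C :: ('x \<Rightarrow> 'k) set)"
    unfolding V.dependent_explicit using t by blast
  thus False using SC_indep[OF C] by blast
qed

lemma ind_orbit_fs:
  assumes "finite D" "A \<subseteq> D" "y \<in> X"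
  shows "(ind (orbit act D y) :: 'x \<Rightarrow> 'k::field) \<in> fs_funs act X"
  unfolding fs_funs_def
proof (intro CollectI conjI allI impI exI[of _ D])
  fix x assume "x \<notin> X"
  thus "(ind (orbit act D y) :: 'x \<Rightarrow> 'k) x = 0" using orb_sub[OF assms(2,3)] by (auto simp: ind_def)
next
  show "finite D" by fact
  show "supports_fun act X D (ind (orbit act D y) :: 'x \<Rightarrow> 'k)"
    unfolding supports_fun_def
  proof (intro allI impI conjI ballI)
    fix \<pi> z assume \<pi>: "fixing D \<pi>"
    show "act \<pi> ` X = X" using X_img[OF assms(2) \<pi>] .
    have a: "aut \<pi>" using \<pi> fixing_aut by blast
    have "act \<pi> ` orbit act D y = orbit act D y"
      using orb_img[OF a] \<pi> orb_eq orb_act by (metis fixing_def image_cong image_ident)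
    hence "fun_act act \<pi> (ind (orbit act D y) :: 'x \<Rightarrow> 'k) = ind (orbit act D y)"
      by (subst fun_act_ind[OF a]) simp
    thus "fun_act act \<pi> (ind (orbit act D y) :: 'x \<Rightarrow> 'k) z = ind (orbit act D y) z" by simp
  qed
qed

lemma Bset_fs: "(Bset :: ('x \<Rightarrow> 'k::field) set) \<subseteq> fs_funs act X"
  unfolding Bset_def using ind_orbit_fs by blast

lemma fs_subspace: "V.subspace (fs_funs act X :: ('x \<Rightarrow> 'k::field) set)"
proof (rule V.subspaceI)
  show "(0 :: 'x \<Rightarrow> 'k) \<in> fs_funs act X"
    unfolding fs_funs_def supports_fun_def fun_act_def using fA X_img by (auto intro!: exI[of _ A])
next
  fix f g :: "'x \<Rightarrow> 'k" assume f: "f \<in> fs_funs act X" and g: "g \<in> fs_funs act X"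
  obtain A1 where A1: "finite A1" "supports_fun act X A1 f" using f unfolding fs_funs_def by blast
  obtain A2 where A2: "finite A2" "supports_fun act X A2 g" using g unfolding fs_funs_def by blast
  have "supports_fun act X (A1 \<union> A2) (f + g)"
    unfolding supports_fun_def
  proof (intro allI impI)
    fix \<pi> assume \<pi>: "fixing (A1 \<union> A2) \<pi>"
    have p1: "fixing A1 \<pi>" "fixing A2 \<pi>" using \<pi> fixing_mono by blast+
    have "act \<pi> ` X = X" using A1(2) p1 unfolding supports_fun_def by blast
    moreover have "\<forall>y\<in>X. fun_act act \<pi> (f + g) y = (f + g) y"
      using A1(2) A2(2) p1 unfolding supports_fun_def fun_act_def by simp
    ultimately show "act \<pi> ` X = X \<and> (\<forall>y\<in>X. fun_act act \<pi> (f + g) y = (f + g) y)" by blast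
  qed
  thus "f + g \<in> fs_funs act X" using f g A1 A2 unfolding fs_funs_def by auto
next
  fix c :: 'k and f :: "'x \<Rightarrow> 'k" assume f: "f \<in> fs_funs act X"
  obtain A1 where A1: "finite A1" "supports_fun act X A1 f" using f unfolding fs_funs_def by blast
  have "supports_fun act X A1 (fscale c f)"
    using A1(2) unfolding supports_fun_def fun_act_def fscale_def by simp
  thus "fscale c f \<in> fs_funs act X" using f A1 unfolding fs_funs_def fscale_def by auto
qed

lemma fs_span: "fs_funs act X \<subseteq> V.span (Bset :: ('x \<Rightarrow> 'k::field) set)"
proof
  fix f :: "'x \<Rightarrow> 'k" assume f: "f \<in> fs_funs act X"
  obtain A1 where A1: "finite A1" "supports_fun act X A1 f" and z: "\<forall>x. x \<notin> X \<longrightarrow> f x = 0"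
    using f unfolding fs_funs_def by blast
  define C where "C = A \<union> A1"
  have C: "finite C" "A \<subseteq> C" using A1 fA by (auto simp: C_def)
  have const: "f z = f y" if y: "y \<in> X" and zz: "z \<in> orbit act C y" for y z
  proof -
    obtain \<pi> where \<pi>: "fixing C \<pi>" "z = act \<pi> y" using zz unfolding orbit_def by blast
    have a: "aut \<pi>" using \<pi> fixing_aut by blast
    have "z \<in> X" using orb_sub[OF C(2) y] zz by blast
    moreover have "fixing A1 \<pi>" using \<pi> fixing_mono C_def by blast
    ultimately have "f (act (inv \<pi>) z) = f z" using A1(2) unfolding supports_fun_def fun_act_def by simp
    thus ?thesis using \<pi>(2) a by simp
  qed
  define Os where "Os = orbit act C ` X"
  have Osfin: "finite Os" using orbits_finite[OF C(1)] by (simp add: Os_def)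
  define pick where "pick Ob = (SOME y. y \<in> Ob)" for Ob :: "'x set"
  have eq: "f = (\<Sum>Ob\<in>Os. fscale (f (pick Ob)) (ind Ob))"
  proof
    fix x
    have r: "(\<Sum>Ob\<in>Os. fscale (f (pick Ob)) (ind Ob)) x = (\<Sum>Ob\<in>Os. f (pick Ob) * ind Ob x)"
      by (rule sum_fscale_apply2)
    show "f x = (\<Sum>Ob\<in>Os. fscale (f (pick Ob)) (ind Ob)) x"
    proof (cases "x \<in> X")
      case False
      have "ind Ob x = (0 :: 'k)" if "Ob \<in> Os" for Ob
        using that False orb_sub[OF C(2)] by (auto simp: Os_def ind_def)
      thus ?thesis using r z False by simp
    next
      case True
      define O0 where "O0 = orbit act C x"
      have O0: "O0 \<in> Os" using True by (simp add: Os_def O0_def)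
      have "pick O0 \<in> O0" unfolding pick_def O0_def using orb_self by (rule someI)
      hence fp: "f (pick O0) = f x"
        using const[OF True] unfolding O0_def by metis
      have oth: "f (pick Ob) * ind Ob x = 0" if ob: "Ob \<in> Os - {O0}" for Ob
      proof -
        obtain y where y: "y \<in> X" "Ob = orbit act C y" using ob by (auto simp: Os_def)
        have "x \<notin> Ob"
        proof
          assume "x \<in> Ob"
          hence "O0 = Ob" using orb_eq y unfolding O0_def by blast
          thus False using ob by simp
        qed
        thus ?thesis by (simp add: ind_def)
      qed
      have "(\<Sum>Ob\<in>Os. f (pick Ob) * ind Ob x) = f (pick O0) * ind O0 x + (\<Sum>Ob\<in>Os - {O0}. f (pick Ob) * ind Ob x)"
        using sum.remove[OF Osfin O0] .
      also have "(\<Sum>Ob\<in>Os - {O0}. f (pick Ob) * ind Ob x) = 0" using oth by (intro sum.neutral) blast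
      also have "f (pick O0) * ind O0 x + 0 = f x" using fp orb_self[of x C] by (simp add: ind_def O0_def)
      finally show ?thesis using r by simp
    qed
  qed
  have "ind Ob \<in> V.span (Bset :: ('x \<Rightarrow> 'k) set)" if ob: "Ob \<in> Os" for Ob
  proof -
    obtain y where y: "y \<in> X" "Ob = orbit act C y" using ob by (auto simp: Os_def)
    have "(ind Ob :: 'x \<Rightarrow> 'k) \<in> V.span (SC C)" using span_orbit[OF C y(1)] y(2) by simp
    thus ?thesis using V.span_mono[OF SC_Bset[OF C(1)]] by blast
  qed
  hence "(\<Sum>Ob\<in>Os. fscale (f (pick Ob)) (ind Ob)) \<in> V.span (Bset :: ('x \<Rightarrow> 'k) set)"
    by (intro V.span_sum V.span_scale) auto
  thus "f \<in> V.span Bset" using eq by simp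
qed

lemma span_Bset: "V.span (Bset :: ('x \<Rightarrow> 'k::field) set) = fs_funs act X"
  using V.span_minimal[OF Bset_fs fs_subspace] fs_span by blast

lemma Bset_inv:
  assumes \<pi>: "fixing A \<pi>"
  shows "fun_act act \<pi> ` (Bset :: ('x \<Rightarrow> 'k::field) set) = Bset"
proof -
  have sub: "fun_act act \<sigma> ` (Bset :: ('x \<Rightarrow> 'k) set) \<subseteq> Bset" if \<sigma>: "fixing A \<sigma>" for \<sigma>
  proof
    fix b assume "b \<in> fun_act act \<sigma> ` (Bset :: ('x \<Rightarrow> 'k) set)"
    then obtain D y where D: "b = fun_act act \<sigma> (ind (orbit act D y))" "finite D" "A \<subseteq> D" "y \<in> X" "basic D y"
      unfolding Bset_def by blast
    have a: "aut \<sigma>" using \<sigma> fixing_aut by blast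
    have b: "b = ind (orbit act (\<sigma> ` D) (act \<sigma> y))" unfolding D(1)
      by (subst fun_act_ind[OF a]) (simp add: orb_img[OF a])
    have "A \<subseteq> \<sigma> ` D" using D(3) \<sigma> by (force simp: fixing_def)
    moreover have "act \<sigma> y \<in> X" using X_inv[OF _ \<sigma> D(4)] by simp
    moreover have "basic (\<sigma> ` D) (act \<sigma> y)" using basic_img[OF \<sigma> D(5)] .
    ultimately show "b \<in> Bset" unfolding Bset_def b using D(2) by blast
  qed
  show ?thesis
  proof
    show "fun_act act \<pi> ` (Bset :: ('x \<Rightarrow> 'k) set) \<subseteq> Bset" using sub[OF \<pi>] .
    show "(Bset :: ('x \<Rightarrow> 'k) set) \<subseteq> fun_act act \<pi> ` Bset"
    proof
      fix b assume b: "b \<in> (Bset :: ('x \<Rightarrow> 'k) set)"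
      have "fun_act act (inv \<pi>) b \<in> Bset" using sub[OF fixing_inv[OF \<pi>]] b by blast
      moreover have "b = fun_act act \<pi> (fun_act act (inv \<pi>) b)" by (rule fun_act_inv[OF fixing_aut[OF \<pi>], symmetric])
      ultimately show "b \<in> fun_act act \<pi> ` Bset" by blast
    qed
  qed
qed

end

definition lab :: "rat set \<Rightarrow> rat set \<Rightarrow> (rat option \<times> bool) list" where
  "lab F D = map (\<lambda>e. (if e \<in> F then Some e else None, e \<in> D)) (sorted_list_of_set (F \<union> D))"

lemma sorted_strict_idx:
  assumes "sorted_wrt (<) (L :: rat list)" "i < length L" "j < length L" "L ! i < L ! j"
  shows "i < j"
proof (rule ccontr)
  assume "\<not> i < j"
  hence "j < i \<or> j = i" by auto
  thus False
  proof
    assume "j < i"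
    hence "L ! j < L ! i" using sorted_wrt_nth_less[OF assms(1)] assms(2) by blast
    thus False using assms(4) by simp
  next
    assume "j = i" thus False using assms(4) by simp
  qed
qed

lemma lab_extend:
  assumes F: "finite F" and D1: "finite D1" and D2: "finite D2" and eq: "lab F D1 = lab F D2"
  shows "\<exists>\<rho>. fixing F \<rho> \<and> \<rho> ` D1 = D2"
proof -
  define L1 where "L1 = sorted_list_of_set (F \<union> D1)"
  define L2 where "L2 = sorted_list_of_set (F \<union> D2)"
  define lb1 where "lb1 e = (if e \<in> F then Some e else None, e \<in> D1)" for e
  define lb2 where "lb2 e = (if e \<in> F then Some e else None, e \<in> D2)" for e
  have m: "map lb1 L1 = map lb2 L2" using eq unfolding lab_def L1_def L2_def lb1_def lb2_def .
  have len: "length L1 = length L2" using arg_cong[OF m, of length] by simp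
  have nth: "lb1 (L1 ! i) = lb2 (L2 ! i)" if "i < length L1" for i
    using arg_cong[OF m, of "\<lambda>l. l ! i"] that len by simp
  have s1: "set L1 = F \<union> D1" "sorted_wrt (<) L1" "distinct L1" using F D1 by (simp_all add: L1_def)
  have s2: "set L2 = F \<union> D2" "sorted_wrt (<) L2" "distinct L2" using F D2 by (simp_all add: L2_def)
  define g where "g e = the (map_of (zip L1 L2) e)" for e
  have gi: "g (L1 ! i) = L2 ! i" if "i < length L1" for i
    using map_of_zip_nth[OF len s1(3)] that len by (simp add: g_def)
  have mono: "\<forall>x\<in>set L1. \<forall>y\<in>set L1. x < y \<longrightarrow> g x < g y"
  proof (intro ballI impI)
    fix x y assume x: "x \<in> set L1" and y: "y \<in> set L1" and xy: "x < y"
    obtain i where i: "i < length L1" "x = L1 ! i" using x by (metis in_set_conv_nth)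
    obtain j where j: "j < length L1" "y = L1 ! j" using y by (metis in_set_conv_nth)
    have "i < j" using sorted_strict_idx[OF s1(2) i(1) j(1)] xy i j by simp
    hence "L2 ! i < L2 ! j" using sorted_wrt_nth_less[OF s2(2)] j len by simp
    thus "g x < g y" using gi i j by simp
  qed
  obtain \<rho> where \<rho>: "aut \<rho>" "\<forall>x\<in>set L1. \<rho> x = g x" using extend[OF _ mono] by auto
  have fixF: "\<rho> e = e" if e: "e \<in> F" for e
  proof -
    have "e \<in> set L1" using e s1 by simp
    then obtain i where i: "i < length L1" "e = L1 ! i" by (metis in_set_conv_nth)
    have "lb2 (L2 ! i) = (Some e, e \<in> D1)" using nth[OF i(1)] e i(2) by (simp add: lb1_def)
    hence "L2 ! i = e" unfolding lb2_def by (auto split: if_splits)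
    thus ?thesis using \<rho>(2) gi i \<open>e \<in> set L1\<close> by simp
  qed
  have img: "\<rho> ` D1 = D2"
  proof
    show "\<rho> ` D1 \<subseteq> D2"
    proof
      fix z assume "z \<in> \<rho> ` D1"
      then obtain e where e: "e \<in> D1" "z = \<rho> e" by blast
      have "e \<in> set L1" using e s1 by simp
      then obtain i where i: "i < length L1" "e = L1 ! i" by (metis in_set_conv_nth)
      have "snd (lb2 (L2 ! i)) = True" using nth[OF i(1)] e i(2) unfolding lb1_def by (metis snd_conv)
      hence "L2 ! i \<in> D2" by (simp add: lb2_def)
      thus "z \<in> D2" using \<rho>(2) gi i e \<open>e \<in> set L1\<close> by simp
    qed
    show "D2 \<subseteq> \<rho> ` D1"
    proof
      fix z assume z: "z \<in> D2"
      have "z \<in> set L2" using z s2 by simp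
      then obtain i where i: "i < length L2" "z = L2 ! i" by (metis in_set_conv_nth)
      have i1: "i < length L1" using i len by simp
      have "snd (lb1 (L1 ! i)) = True" using nth[OF i1] z i(2) unfolding lb2_def by (metis snd_conv)
      hence "L1 ! i \<in> D1" by (simp add: lb1_def)
      moreover have "\<rho> (L1 ! i) = z" using \<rho>(2) gi[OF i1] i nth_mem[OF i1] by simp
      ultimately show "z \<in> \<rho> ` D1" by blast
    qed
  qed
  show ?thesis using \<rho>(1) fixF img by (auto simp: fixing_def)
qed

context nom begin

lemma fun_act_comp:
  assumes "aut \<pi>" "aut \<sigma>" shows "fun_act act \<pi> (fun_act act \<sigma> f) = fun_act act (\<pi> \<circ> \<sigma>) f"
proof -
  have "inv (\<pi> \<circ> \<sigma>) = inv \<sigma> \<circ> inv \<pi>" using assms aut_bij o_inv_distrib by blast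
  hence "act (inv (\<pi> \<circ> \<sigma>)) z = act (inv \<sigma>) (act (inv \<pi>) z)" for z
    using assms by (simp add: act_comp aut_inv)
  thus ?thesis unfolding fun_act_def by (simp add: fun_eq_iff)
qed

end

context fx begin

lemma basic_card:
  assumes fD: "finite D" and b: "basic D y"
  shows "card (D - A) \<le> card (supp y)"
proof -
  define f where "f c = Max {u\<in>supp y. u \<le> c}" for c
  have fc: "f c \<in> supp y \<and> covers D (f c) c" if c: "c \<in> D - A" for c
  proof -
    obtain t where "t \<in> supp y" "covers D t c" using b c unfolding basic_def by blast
    thus ?thesis using max_cover unfolding f_def by blast
  qed
  have inj: "inj_on f (D - A)"
  proof
    fix c1 c2 assume c: "c1 \<in> D - A" "c2 \<in> D - A" "f c1 = f c2"
    show "c1 = c2"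
    proof (rule ccontr)
      assume "c1 \<noteq> c2"
      hence "c1 < c2 \<or> c2 < c1" by auto
      thus False
      proof
        assume lt: "c1 < c2"
        have "c1 < f c2" using fc[OF c(2)] c(1) lt unfolding covers_def by blast
        moreover have "f c1 \<le> c1" using fc[OF c(1)] unfolding covers_def by blast
        ultimately show False using c(3) by simp
      next
        assume lt: "c2 < c1"
        have "c2 < f c1" using fc[OF c(1)] c(2) lt unfolding covers_def by blast
        moreover have "f c2 \<le> c2" using fc[OF c(2)] unfolding covers_def by blast
        ultimately show False using c(3) by simp
      qed
    qed
  qed
  have "f ` (D - A) \<subseteq> supp y" using fc by blast
  thus ?thesis using card_inj_on_le[OF inj] by simp
qed

definition bkey :: "rat set \<Rightarrow> 'x \<Rightarrow> 'x set \<times> (rat option \<times> bool) list set" where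
  "bkey D y = (orbit act A y, {lab (A \<union> supp (rep (orbit act A y))) (inv \<pi> ` D) | \<pi>.
      fixing A \<pi> \<and> act \<pi> (rep (orbit act A y)) = y})"

definition Lset :: "'x set \<Rightarrow> (rat option \<times> bool) list set" where
  "Lset Ob = {xs. set xs \<subseteq> (Some ` (A \<union> supp (rep Ob)) \<union> {None}) \<times> UNIV
      \<and> length xs \<le> card (A \<union> supp (rep Ob)) + card A + card (supp (rep Ob))}"

lemma bkey_range:
  assumes fD: "finite D" and AD: "A \<subseteq> D" and y: "y \<in> X" and b: "basic D y"
  shows "bkey D y \<in> Sigma (orbit act A ` X) (\<lambda>Ob. Pow (Lset Ob))"
proof -
  define Ob where "Ob = orbit act A y"
  define x where "x = rep Ob"
  define F where "F = A \<union> supp x"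
  have "lab F (inv \<pi> ` D) \<in> Lset Ob" if \<pi>: "fixing A \<pi>" "act \<pi> x = y" for \<pi>
  proof -
    have a: "aut \<pi>" using \<pi> fixing_aut by blast
    have ai: "aut (inv \<pi>)" using aut_inv[OF a] .
    have fF: "finite F" using fA by (simp add: F_def)
    have cD: "card (inv \<pi> ` D) = card D" using card_image aut_inj[OF ai] by (metis inj_on_subset subset_UNIV)
    have "card D \<le> card A + card (D - A)"
    proof -
      have "D = A \<union> (D - A)" using AD by blast
      hence "card D \<le> card A + card (D - A)" by (metis card_Un_le)
      thus ?thesis .
    qed
    moreover have "card (D - A) \<le> card (supp y)" using basic_card[OF fD b] .
    moreover have "card (supp y) = card (supp x)"
      using \<pi>(2) supp_act[OF a, of x] card_image aut_inj[OF a] by (metis inj_on_subset subset_UNIV)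
    ultimately have cD': "card (inv \<pi> ` D) \<le> card A + card (supp x)" using cD by linarith
    have "length (lab F (inv \<pi> ` D)) = card (F \<union> inv \<pi> ` D)" by (simp add: lab_def)
    also have "\<dots> \<le> card F + card (inv \<pi> ` D)" by (rule card_Un_le)
    finally have len: "length (lab F (inv \<pi> ` D)) \<le> card F + card A + card (supp x)" using cD' by linarith
    have st: "set (lab F (inv \<pi> ` D)) \<subseteq> (Some ` F \<union> {None}) \<times> UNIV"
      unfolding lab_def by auto
    show ?thesis using len st unfolding Lset_def F_def x_def by simp
  qed
  hence "snd (bkey D y) \<in> Pow (Lset Ob)" unfolding bkey_def Ob_def[symmetric] x_def[symmetric] F_def[symmetric]
    by auto
  moreover have "fst (bkey D y) \<in> orbit act A ` X" using y by (simp add: bkey_def)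
  ultimately show ?thesis by (cases "bkey D y") (auto simp: bkey_def Ob_def)
qed

lemma Lset_finite: "finite (Lset Ob)"
proof -
  have "finite ((Some ` (A \<union> supp (rep Ob)) \<union> {None}) \<times> (UNIV :: bool set))" using fA by simp
  thus ?thesis unfolding Lset_def by (rule finite_lists_length_le)
qed

lemma bkey_eq:
  assumes fD1: "finite D1" and y1: "y1 \<in> X" and fD2: "finite D2" and y2: "y2 \<in> X"
    and k: "bkey D1 y1 = bkey D2 y2"
  shows "\<exists>\<sigma>. fixing A \<sigma> \<and> act \<sigma> y1 = y2 \<and> \<sigma> ` D1 = D2"
proof -
  have Ob: "orbit act A y1 = orbit act A y2" using k by (simp add: bkey_def)
  define x where "x = rep (orbit act A y1)"
  have x: "x \<in> X" "orbit act A x = orbit act A y1" using rep[OF y1] by (auto simp: x_def)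
  define F where "F = A \<union> supp x"
  have "y1 \<in> orbit act A x" using x orb_self by blast
  then obtain \<pi>1 where \<pi>1: "fixing A \<pi>1" "act \<pi>1 x = y1" unfolding orbit_def by blast
  have "lab F (inv \<pi>1 ` D1) \<in> snd (bkey D1 y1)"
    unfolding bkey_def x_def[symmetric] F_def using \<pi>1 by auto
  hence "lab F (inv \<pi>1 ` D1) \<in> snd (bkey D2 y2)" using k by simp
  then obtain \<pi>2 where \<pi>2: "fixing A \<pi>2" "act \<pi>2 x = y2" "lab F (inv \<pi>1 ` D1) = lab F (inv \<pi>2 ` D2)"
    unfolding bkey_def Ob[symmetric] x_def[symmetric] F_def by auto
  have a1: "aut \<pi>1" and a2: "aut \<pi>2" using \<pi>1 \<pi>2 fixing_aut by blast+
  obtain \<rho> where \<rho>: "fixing F \<rho>" "\<rho> ` (inv \<pi>1 ` D1) = inv \<pi>2 ` D2"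
    using lab_extend[OF _ _ _ \<pi>2(3)] fA fD1 fD2 by (auto simp: F_def)
  have ar: "aut \<rho>" using \<rho> fixing_aut by blast
  define \<sigma> where "\<sigma> = \<pi>2 \<circ> \<rho> \<circ> inv \<pi>1"
  have fs: "fixing A \<sigma>" unfolding \<sigma>_def
    using \<pi>1 \<pi>2 fixing_mono[OF \<rho>(1)] fixing_inv fixing_comp by (metis F_def Un_upper1)
  have rx: "act \<rho> x = x"
    using supp_agree[OF ar aut_id, of x] \<rho>(1) by (auto simp: fixing_def F_def)
  have "act \<sigma> y1 = act \<pi>2 (act \<rho> (act (inv \<pi>1) y1))"
    unfolding \<sigma>_def using a1 a2 ar by (simp add: act_comp aut_comp aut_inv)
  also have "\<dots> = y2" using \<pi>1(2) \<pi>2(2) rx a1 by auto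
  finally have e1: "act \<sigma> y1 = y2" .
  have "\<sigma> ` D1 = \<pi>2 ` (\<rho> ` (inv \<pi>1 ` D1))" unfolding \<sigma>_def by (simp add: image_comp)
  also have "\<dots> = \<pi>2 ` (inv \<pi>2 ` D2)" using \<rho>(2) by simp
  also have "\<dots> = D2" using a2 by (simp add: image_comp)
  finally show ?thesis using fs e1 by blast
qed

definition GO :: "('x \<Rightarrow> 'k) \<Rightarrow> ('x \<Rightarrow> 'k) set" where
  "GO f = {fun_act act \<pi> f | \<pi>. fixing A \<pi>}"

lemma GO_act:
  assumes \<sigma>: "fixing A \<sigma>" shows "GO (fun_act act \<sigma> f) = GO f"
proof -
  have a: "aut \<sigma>" using \<sigma> fixing_aut by blast
  show ?thesis
  proof
    show "GO (fun_act act \<sigma> f) \<subseteq> GO f"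
    proof
      fix g assume "g \<in> GO (fun_act act \<sigma> f)"
      then obtain \<pi> where \<pi>: "fixing A \<pi>" "g = fun_act act \<pi> (fun_act act \<sigma> f)" unfolding GO_def by blast
      have "g = fun_act act (\<pi> \<circ> \<sigma>) f" using \<pi> fun_act_comp a fixing_aut by metis
      moreover have "fixing A (\<pi> \<circ> \<sigma>)" using \<pi>(1) \<sigma> fixing_comp by blast
      ultimately show "g \<in> GO f" unfolding GO_def by blast
    qed
    show "GO f \<subseteq> GO (fun_act act \<sigma> f)"
    proof
      fix g assume "g \<in> GO f"
      then obtain \<pi> where \<pi>: "fixing A \<pi>" "g = fun_act act \<pi> f" unfolding GO_def by blast
      have e1: "fun_act act (\<pi> \<circ> inv \<sigma>) (fun_act act \<sigma> f) = fun_act act (\<pi> \<circ> inv \<sigma> \<circ> \<sigma>) f"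
        using fun_act_comp \<pi>(1) a fixing_aut aut_comp aut_inv by metis
      have e2: "\<pi> \<circ> inv \<sigma> \<circ> \<sigma> = \<pi>" using a by (simp add: o_assoc[symmetric])
      have "g = fun_act act (\<pi> \<circ> inv \<sigma>) (fun_act act \<sigma> f)" unfolding \<pi>(2) by (simp only: e1 e2)
      moreover have "fixing A (\<pi> \<circ> inv \<sigma>)" using \<pi>(1) fixing_inv[OF \<sigma>] fixing_comp by blast
      ultimately show "g \<in> GO (fun_act act \<sigma> f)" unfolding GO_def by blast
    qed
  qed
qed

lemma Bset_orbits_finite: "finite (GO ` (Bset :: ('x \<Rightarrow> 'k::field) set))"
proof -
  define ch where "ch b = (SOME p. b = ind (orbit act (fst p) (snd p)) \<and> finite (fst p) \<and> A \<subseteq> fst p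
     \<and> snd p \<in> X \<and> basic (fst p) (snd p))" for b :: "'x \<Rightarrow> 'k"
  have ch: "b = ind (orbit act (fst (ch b)) (snd (ch b))) \<and> finite (fst (ch b)) \<and> A \<subseteq> fst (ch b)
     \<and> snd (ch b) \<in> X \<and> basic (fst (ch b)) (snd (ch b))" if b: "b \<in> Bset" for b
  proof -
    obtain D y where "b = ind (orbit act D y)" "finite D" "A \<subseteq> D" "y \<in> X" "basic D y"
      using b unfolding Bset_def by blast
    hence "\<exists>p. b = ind (orbit act (fst p) (snd p)) \<and> finite (fst p) \<and> A \<subseteq> fst p
     \<and> snd p \<in> X \<and> basic (fst p) (snd p)" by (intro exI[of _ "(D, y)"]) simp
    thus ?thesis unfolding ch_def by (rule someI_ex)
  qed
  define key where "key b = bkey (fst (ch b)) (snd (ch b))" for b :: "'x \<Rightarrow> 'k"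
  have kr: "key ` Bset \<subseteq> Sigma (orbit act A ` X) (\<lambda>Ob. Pow (Lset Ob))"
    using ch bkey_range unfolding key_def by blast
  have kf: "finite (key ` Bset)"
    by (rule finite_subset[OF kr]) (use oX Lset_finite in blast)
  have "GO b1 = GO b2" if b: "b1 \<in> Bset" "b2 \<in> Bset" "key b1 = key b2" for b1 b2
  proof -
    obtain \<sigma> where \<sigma>: "fixing A \<sigma>" "act \<sigma> (snd (ch b1)) = snd (ch b2)" "\<sigma> ` fst (ch b1) = fst (ch b2)"
      using bkey_eq[of "fst (ch b1)" "snd (ch b1)" "fst (ch b2)" "snd (ch b2)"] ch[OF b(1)] ch[OF b(2)] b(3)
      unfolding key_def by blast
    have a: "aut \<sigma>" using \<sigma> fixing_aut by blast
    have "fun_act act \<sigma> b1 = ind (act \<sigma> ` orbit act (fst (ch b1)) (snd (ch b1)))"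
      using ch[OF b(1)] fun_act_ind[OF a] by metis
    also have "\<dots> = ind (orbit act (fst (ch b2)) (snd (ch b2)))" using orb_img[OF a] \<sigma> by simp
    also have "\<dots> = b2" using ch[OF b(2)] by simp
    finally have "fun_act act \<sigma> b1 = b2" .
    thus ?thesis using GO_act[OF \<sigma>(1)] by blast
  qed
  thus ?thesis using finite_image_key[OF kf, of GO] by blast
qed

end

theorem mainTheorem11:
  fixes act :: "(rat \<Rightarrow> rat) \<Rightarrow> 'x \<Rightarrow> 'x"
    and X :: "'x set"
  assumes "fm_universe act"
    and "definable act X"
  shows "\<exists>B :: ('x \<Rightarrow> 'k::field) set.
           B \<subseteq> fs_funs act X \<and>
           definable_funset act X B \<and>
           \<not> module.dependent fscale B \<and>
           module.span fscale B = fs_funs act X"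
proof -
  obtain A where A: "finite A" "supports_set act A X" "finite (orbit act A ` X)"
    using assms(2) unfolding definable_def by blast
  interpret F: fx act X A
    by (intro fx.intro nom.intro fx_axioms.intro) (use assms(1) A in auto)
  have d: "definable_funset act X (F.Bset :: ('x \<Rightarrow> 'k) set)"
    unfolding definable_funset_def
  proof (intro exI[of _ A] conjI allI impI)
    show "finite A" by fact
    fix \<pi> assume \<pi>: "fixing A \<pi>"
    show "act \<pi> ` X = X" using F.X_img[OF _ \<pi>] by simp
    show "fun_act act \<pi> ` (F.Bset :: ('x \<Rightarrow> 'k) set) = F.Bset" using F.Bset_inv[OF \<pi>] .
  next
    show "finite ((\<lambda>f. {fun_act act \<pi> f |\<pi>. fixing A \<pi>}) ` (F.Bset :: ('x \<Rightarrow> 'k) set))"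
      using F.Bset_orbits_finite unfolding F.GO_def .
  qed
  show ?thesis
    using F.Bset_fs d F.Bset_indep F.span_Bset by blast
qed

end
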